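(* Let $v:\mathbb X\times\mathbb X\to[0,\infty]$ be a measurable symmetric pair potential and $z:\mathbb X\to[0,\infty)$ measurable. The following are equivalent: (i) $\tilde T_q^\circ(z)<\infty$ for all $q\in\mathbb X$; (ii) there exists a measurable function $a:\mathbb X\to[0,\infty)$ such that for all $x_0\in\mathbb X$, $$\sum_{k=1}^\infty\frac{1}{k!}\int_{\mathbb X^k}\prod_{j=1}^k|f(x_0,y_j)|\prod_{1\le i<j\le k}\bigl(1+f(y_i,y_j)\bigr)\prod_{j=1}^k z(y_j)e^{a(y_j)}\,d\lambda^k(\mathbf y)\le e^{a(x_0)}-1.$$
   Context: $(\mathbb X,\mathcal X)$ is a complete separable metric space with Borel $\sigma$-algebra, $\lambda$ a measure on it finite on bounded sets, $\lambda_z(dx)=z(x)\lambda(dx)$, $f(x,y)=e^{-v(x,y)}-1$ (with $e^{-\infty}=0$). For $n\in\mathbb N$, $\mathcal T_n^\circ$ is the set of (labelled) trees with vertex set $\{0,1,\dots,n\}$; each such tree is regarded as rooted at $0$, which defines for every vertex $k$ its set of children $C_k$. For $x_0,\dots,x_n\in\mathbb X$ set $$\tilde w(T;x_0,\dots,x_n)=\prod_{k=0}^n\Bigl(\prod_{i\in C_k}|f(x_k,x_i)|\prod_{i,j\in C_k,\,i<j}\bigl(1+f(x_i,x_j)\bigr)\Bigr),$$ and for $q\in\mathbb X$ $$\tilde T_q^\circ(z)=1+\sum_{n=1}^\infty\frac1{n!}\int_{\mathbb X^n}\sum_{T\in\mathcal T_n^\circ}\tilde w(T;q,x_1,\dots,x_n)\,d\lambda_z(x_1)\cdots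 d\lambda_z(x_n)\in[1,\infty].$$ *)

theory Defs
  imports "HOL-Analysis.Analysis" "HOL-Probability.Probability"
begin

definition expneg :: "ennreal \<Rightarrow> real" where
  "expneg t = (if t = \<top> then 0 else exp (- enn2real t))"

definition mayer :: "('a \<Rightarrow> 'a \<Rightarrow> ennreal) \<Rightarrow> 'a \<Rightarrow> 'a \<Rightarrow> real" where
  "mayer v x y = expneg (v x y) - 1"

text \<open>Graphs on {0..n} are given by their sets of (unordered) edges, each edge a 2-element set.\<close>
definition reach :: "nat set set \<Rightarrow> nat \<Rightarrow> nat \<Rightarrow> bool" where
  "reach E a b \<longleftrightarrow> (a, b) \<in> {(x, y). {x, y} \<in> E}\<^sup>*"

text \<open>Trees: connected, and acyclic (no edge lies on a cycle, i.e. removing any edge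
  disconnects its endpoints).\<close>
definition trees :: "nat \<Rightarrow> nat set set set" where
  "trees n = {E. (\<forall>e\<in>E. e \<subseteq> {0..n} \<and> card e = 2)
               \<and> (\<forall>i\<in>{0..n}. reach E 0 i)
               \<and> (\<forall>e\<in>E. \<forall>a b. e = {a, b} \<longrightarrow> \<not> reach (E - {e}) a b)}"

text \<open>Children of vertex k when the tree is rooted at 0: neighbours i of k such that
  after deleting the edge {k,i} the vertex k is still connected to the root 0.\<close>
definition children :: "nat set set \<Rightarrow> nat \<Rightarrow> nat set" where
  "children E k = {i. {k, i} \<in> E \<and> reach (E - {{k, i}}) 0 k}"

text \<open>Tree weight w~(T; x_0,...,x_n) (with values in [0,1], taken in ennreal)\<close>
definition tree_weight ::
  "('a \<Rightarrow> 'a \<Rightarrow> ennreal) \<Rightarrow> nat \<Rightarrow> nat set set \<Rightarrow> (nat \<Rightarrow> 'a) \<Rightarrow> ennreal" where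
  "tree_weight v n T x =
     (\<Prod>k\<in>{0..n}.
        (\<Prod>i\<in>children T k. ennreal \<bar>mayer v (x k) (x i)\<bar>) *
        (\<Prod>p\<in>{(i, j). i \<in> children T k \<and> j \<in> children T k \<and> i < j}.
            ennreal (1 + mayer v (x (fst p)) (x (snd p)))))"

definition Ttilde ::
  "'a measure \<Rightarrow> ('a \<Rightarrow> 'a \<Rightarrow> ennreal) \<Rightarrow> ('a \<Rightarrow> real) \<Rightarrow> 'a \<Rightarrow> ennreal" where
  "Ttilde lam v z q =
     1 + (\<Sum>m. let n = Suc m in
            ennreal (1 / fact n) *
            (\<integral>\<^sup>+ x. (\<Sum>T\<in>trees n. tree_weight v n T (x(0 := q)))
               \<partial>(PiM {1..n} (\<lambda>_. density lam (\<lambda>y. ennreal (z y))))))"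

definition cond_sum ::
  "'a measure \<Rightarrow> ('a \<Rightarrow> 'a \<Rightarrow> ennreal) \<Rightarrow> ('a \<Rightarrow> real) \<Rightarrow> ('a \<Rightarrow> real) \<Rightarrow> 'a \<Rightarrow> ennreal" where
  "cond_sum lam v z a x0 =
     (\<Sum>m. let k = Suc m in
        ennreal (1 / fact k) *
        (\<integral>\<^sup>+ y. (\<Prod>j\<in>{1..k}. ennreal \<bar>mayer v x0 (y j)\<bar>) *
                 (\<Prod>p\<in>{(i, j). i \<in> {1..k} \<and> j \<in> {1..k} \<and> i < j}.
                     ennreal (1 + mayer v (y (fst p)) (y (snd p)))) *
                 (\<Prod>j\<in>{1..k}. ennreal (z (y j) * exp (a (y j))))
           \<partial>(PiM {1..k} (\<lambda>_. lam))))"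

end

theory Submission
  imports Defs
begin


definition prel :: "(nat \<Rightarrow> nat) \<Rightarrow> nat set \<Rightarrow> (nat \<times> nat) set" where
  "prel p V = {(i, p i) | i. i \<in> V}"

definition par :: "nat \<Rightarrow> nat set \<Rightarrow> (nat \<Rightarrow> nat) set" where
  "par r V = {p \<in> V \<rightarrow>\<^sub>E insert r V. \<forall>i\<in>V. (i, r) \<in> (prel p V)\<^sup>*}"

definition fib :: "(nat \<Rightarrow> nat) \<Rightarrow> nat set \<Rightarrow> nat \<Rightarrow> nat set" where
  "fib p V k = {i \<in> V. p i = k}"

definition pairs :: "nat set \<Rightarrow> (nat \<times> nat) set" where
  "pairs S = {(i, j). i \<in> S \<and> j \<in> S \<and> i < j}"

definition blockw :: "('a \<Rightarrow> 'a \<Rightarrow> ennreal) \<Rightarrow> ('a \<Rightarrow> 'a \<Rightarrow> ennreal) \<Rightarrow> 'a \<Rightarrow> nat set \<Rightarrow> (nat \<Rightarrow> 'a) \<Rightarrow> ennreal" where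
  "blockw A B y S x = (\<Prod>i\<in>S. A y (x i)) * (\<Prod>q\<in>pairs S. B (x (fst q)) (x (snd q)))"

definition wt :: "('a \<Rightarrow> 'a \<Rightarrow> ennreal) \<Rightarrow> ('a \<Rightarrow> 'a \<Rightarrow> ennreal) \<Rightarrow> nat \<Rightarrow> nat set \<Rightarrow> (nat \<Rightarrow> nat) \<Rightarrow> (nat \<Rightarrow> 'a) \<Rightarrow> ennreal" where
  "wt A B r V p x = (\<Prod>k\<in>insert r V. blockw A B (x k) (fib p V k) x)"

lemma prel_mem: "(a, b) \<in> prel p V \<longleftrightarrow> a \<in> V \<and> b = p a"
  by (auto simp: prel_def)

lemma sv_prel: "single_valued (prel p V)"
  by (auto simp: single_valued_def prel_def)

lemma noescape: "(r, y) \<in> (prel p V)\<^sup>* \<Longrightarrow> r \<notin> V \<Longrightarrow> y = r"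
  by (erule converse_rtranclE) (auto simp: prel_mem)

lemma prel_cong: "(\<And>i. i \<in> V \<Longrightarrow> p i = q i) \<Longrightarrow> prel p V = prel q V"
  by (auto simp: prel_def)

lemma prel_mono: "V \<subseteq> W \<Longrightarrow> (\<And>i. i \<in> V \<Longrightarrow> p i = q i) \<Longrightarrow> prel p V \<subseteq> prel q W"
  by (auto simp: prel_def)

lemma finite_par: "finite V \<Longrightarrow> finite (par r V)"
  unfolding par_def by (rule finite_subset[of _ "V \<rightarrow>\<^sub>E insert r V"]) (auto intro: finite_PiE)

lemma anc_unique:
  assumes "r \<notin> V" "c \<in> V" "p c = r" "c' \<in> V" "p c' = r"
    "(i, c) \<in> (prel p V)\<^sup>*" "(i, c') \<in> (prel p V)\<^sup>*"
  shows "c = c'"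
proof -
  have "(c, c') \<in> (prel p V)\<^sup>* \<or> (c', c) \<in> (prel p V)\<^sup>*"
    using single_valued_confluent[OF sv_prel] assms(6,7) by blast
  then show ?thesis
  proof
    assume h: "(c, c') \<in> (prel p V)\<^sup>*"
    show ?thesis
    proof (rule ccontr)
      assume "c \<noteq> c'"
      then obtain y where "(c, y) \<in> prel p V" "(y, c') \<in> (prel p V)\<^sup>*"
        using h by (metis converse_rtranclE)
      then have "y = r" using assms by (auto simp: prel_mem)
      then have "c' = r" using noescape \<open>(y, c') \<in> _\<close> assms(1) by blast
      then show False using assms by auto
    qed
  next
    assume h: "(c', c) \<in> (prel p V)\<^sup>*"
    show ?thesis
    proof (rule ccontr)
      assume "c \<noteq> c'"
      then obtain y where "(c', y) \<in> prel p V" "(y, c) \<in> (prel p V)\<^sup>*"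
        using h by (metis converse_rtranclE)
      then have "y = r" using assms by (auto simp: prel_mem)
      then have "c = r" using noescape \<open>(y, c) \<in> _\<close> assms(1) by blast
      then show False using assms by auto
    qed
  qed
qed

lemma anc_exists:
  assumes "(i, r) \<in> (prel p V)\<^sup>*" "i \<noteq> r"
  shows "\<exists>c. c \<in> V \<and> p c = r \<and> (i, c) \<in> (prel p V)\<^sup>*"
  using assms by (cases rule: rtranclE) (auto simp: prel_mem)

definition anc :: "nat \<Rightarrow> nat set \<Rightarrow> (nat \<Rightarrow> nat) \<Rightarrow> nat \<Rightarrow> nat" where
  "anc r V p i = (THE c. c \<in> fib p V r \<and> (i, c) \<in> (prel p V)\<^sup>*)"

lemma anc_prop:
  assumes "p \<in> par r V" "r \<notin> V" "i \<in> V"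
  shows "anc r V p i \<in> fib p V r \<and> (i, anc r V p i) \<in> (prel p V)\<^sup>*"
proof -
  have "(i, r) \<in> (prel p V)\<^sup>*" using assms by (auto simp: par_def)
  then obtain c where c: "c \<in> V" "p c = r" "(i, c) \<in> (prel p V)\<^sup>*"
    using anc_exists assms by blast
  have "\<exists>!c. c \<in> fib p V r \<and> (i, c) \<in> (prel p V)\<^sup>*"
    using c anc_unique[OF assms(2)] by (auto simp: fib_def)
  then show ?thesis unfolding anc_def by (rule theI')
qed

lemma anc_eq:
  assumes "p \<in> par r V" "r \<notin> V" "i \<in> V" "c \<in> fib p V r" "(i, c) \<in> (prel p V)\<^sup>*"
  shows "anc r V p i = c"
  using anc_prop[OF assms(1-3)] anc_unique[OF assms(2)] assms(4,5) by (auto simp: fib_def)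

definition blk :: "nat set \<Rightarrow> (nat \<Rightarrow> nat) \<Rightarrow> nat \<Rightarrow> nat set" where
  "blk S \<pi> c = {j \<in> S. \<pi> j = c}"

definition glue :: "nat set \<Rightarrow> nat \<Rightarrow> nat set \<Rightarrow> (nat \<Rightarrow> nat) \<Rightarrow> (nat \<Rightarrow> nat \<Rightarrow> nat) \<Rightarrow> nat \<Rightarrow> nat" where
  "glue V r C \<pi> ps = (\<lambda>i. if i \<in> C then r else if i \<in> V - C then ps (\<pi> i) i else undefined)"

definition decs :: "nat \<Rightarrow> nat set \<Rightarrow> (nat set \<times> (nat \<Rightarrow> nat) \<times> (nat \<Rightarrow> nat \<Rightarrow> nat)) set" where
  "decs r V = (SIGMA C:{C. C \<subseteq> V \<and> C \<noteq> {}}. SIGMA \<pi>:(V - C) \<rightarrow>\<^sub>E C. Pi\<^sub>E C (\<lambda>c. par c (blk (V - C) \<pi> c)))"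

definition dec :: "nat \<Rightarrow> nat set \<Rightarrow> (nat \<Rightarrow> nat) \<Rightarrow> (nat set \<times> (nat \<Rightarrow> nat) \<times> (nat \<Rightarrow> nat \<Rightarrow> nat))" where
  "dec r V p = (let C = fib p V r; \<pi> = restrict (anc r V p) (V - C) in
      (C, \<pi>, \<lambda>c\<in>C. restrict p (blk (V - C) \<pi> c)))"

lemma par_memD:
  assumes "p \<in> par r V"
  shows "\<And>i. i \<in> V \<Longrightarrow> p i \<in> insert r V" "\<And>i. i \<notin> V \<Longrightarrow> p i = undefined"
    "\<And>i. i \<in> V \<Longrightarrow> (i, r) \<in> (prel p V)\<^sup>*"
  using assms by (auto simp: par_def PiE_def extensional_def)

lemma glue_par:
  assumes rV: "r \<notin> V" and d: "(C, \<pi>, ps) \<in> decs r V"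
  shows "glue V r C \<pi> ps \<in> par r V"
proof -
  let ?g = "glue V r C \<pi> ps"
  have C: "C \<subseteq> V" and \<pi>: "\<pi> \<in> (V - C) \<rightarrow>\<^sub>E C"
    and ps: "\<And>c. c \<in> C \<Longrightarrow> ps c \<in> par c (blk (V - C) \<pi> c)"
    using d by (auto simp: decs_def)
  have blkV: "blk (V - C) \<pi> c \<subseteq> V" for c by (auto simp: blk_def)
  have vals: "?g i \<in> insert r V" if "i \<in> V" for i
  proof (cases "i \<in> C")
    case False
    then have i: "i \<in> blk (V - C) \<pi> (\<pi> i)" "\<pi> i \<in> C" using that \<pi> by (auto simp: blk_def)
    have "ps (\<pi> i) i \<in> insert (\<pi> i) (blk (V - C) \<pi> (\<pi> i))"
      using par_memD(1)[OF ps[OF i(2)] i(1)] .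
    then show ?thesis using False that C blkV i by (auto simp: glue_def)
  qed (auto simp: glue_def)
  have ext: "?g \<in> extensional V" using C by (auto simp: glue_def extensional_def)
  have reach: "(i, r) \<in> (prel ?g V)\<^sup>*" if "i \<in> V" for i
  proof (cases "i \<in> C")
    case True
    then have "(i, r) \<in> prel ?g V" using that by (auto simp: prel_mem glue_def)
    then show ?thesis by auto
  next
    case False
    let ?c = "\<pi> i" let ?B = "blk (V - C) \<pi> (\<pi> i)"
    have i: "i \<in> ?B" "?c \<in> C" using that False \<pi> by (auto simp: blk_def)
    have "(i, ?c) \<in> (prel (ps ?c) ?B)\<^sup>*" using par_memD(3)[OF ps[OF i(2)] i(1)] .
    moreover have "prel (ps ?c) ?B \<subseteq> prel ?g V"
      by (rule prel_mono) (auto simp: blk_def glue_def)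
    ultimately have "(i, ?c) \<in> (prel ?g V)\<^sup>*" using rtrancl_mono by blast
    moreover have "(?c, r) \<in> prel ?g V" using i C by (auto simp: prel_mem glue_def)
    ultimately show ?thesis by auto
  qed
  show ?thesis using vals ext reach by (auto simp: par_def PiE_iff extensional_def)
qed

lemma fib_glue:
  assumes rV: "r \<notin> V" and d: "(C, \<pi>, ps) \<in> decs r V"
  shows "fib (glue V r C \<pi> ps) V r = C"
proof -
  have C: "C \<subseteq> V" and \<pi>: "\<pi> \<in> (V - C) \<rightarrow>\<^sub>E C"
    and ps: "\<And>c. c \<in> C \<Longrightarrow> ps c \<in> par c (blk (V - C) \<pi> c)"
    using d by (auto simp: decs_def)
  have "glue V r C \<pi> ps i \<noteq> r" if "i \<in> V - C" for i
  proof -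
    have i: "i \<in> blk (V - C) \<pi> (\<pi> i)" "\<pi> i \<in> C" using that \<pi> by (auto simp: blk_def)
    have "ps (\<pi> i) i \<in> insert (\<pi> i) (blk (V - C) \<pi> (\<pi> i))"
      using par_memD(1)[OF ps[OF i(2)] i(1)] .
    then have "ps (\<pi> i) i \<in> V" using i C by (auto simp: blk_def)
    then show ?thesis using that rV by (auto simp: glue_def)
  qed
  then show ?thesis using C by (auto simp: fib_def glue_def)
qed

lemma block_step:
  assumes p: "p \<in> par r V" and rV: "r \<notin> V"
    and c: "c \<in> fib p V r" and i: "i \<in> blk (V - fib p V r) (restrict (anc r V p) (V - fib p V r)) c"
  shows "p i = c \<or> p i \<in> blk (V - fib p V r) (restrict (anc r V p) (V - fib p V r)) c"
proof -
  let ?C = "fib p V r"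
  have iV: "i \<in> V" "i \<notin> ?C" and ai: "anc r V p i = c" using i by (auto simp: blk_def)
  have ic: "(i, c) \<in> (prel p V)\<^sup>*" using anc_prop[OF p rV iV(1)] ai by auto
  have "i \<noteq> c" using iV c by auto
  then obtain y where y: "(i, y) \<in> prel p V" "(y, c) \<in> (prel p V)\<^sup>*"
    using ic by (metis converse_rtranclE)
  have yp: "y = p i" using y by (auto simp: prel_mem)
  have cV: "c \<in> V" "p c = r" using c by (auto simp: fib_def)
  have "y \<noteq> r"
  proof
    assume "y = r" then have "c = r" using noescape y(2) rV by blast
    then show False using cV rV by auto
  qed
  then have yV: "y \<in> V" using par_memD(1)[OF p iV(1)] yp by auto
  show ?thesis
  proof (cases "y = c")
    case False
    have "y \<notin> ?C"
    proof
      assume "y \<in> ?C"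
      then have "y = c" using anc_unique[OF rV, of y p c y] y(2) cV by (auto simp: fib_def)
      then show False using False by simp
    qed
    moreover have "anc r V p y = c" using anc_eq[OF p rV yV c y(2)] .
    ultimately show ?thesis using yV yp by (auto simp: blk_def)
  qed (use yp in auto)
qed

lemma block_reach:
  assumes p: "p \<in> par r V" and rV: "r \<notin> V"
    and c: "c \<in> fib p V r" and i: "i \<in> blk (V - fib p V r) (restrict (anc r V p) (V - fib p V r)) c"
  shows "(i, c) \<in> (prel p (blk (V - fib p V r) (restrict (anc r V p) (V - fib p V r)) c))\<^sup>*"
proof -
  let ?B = "blk (V - fib p V r) (restrict (anc r V p) (V - fib p V r)) c"
  have iV: "i \<in> V" and ai: "anc r V p i = c" using i by (auto simp: blk_def)
  have ic: "(i, c) \<in> (prel p V)\<^sup>*" using anc_prop[OF p rV iV] ai by auto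
  have "j \<in> ?B \<longrightarrow> (j, c) \<in> (prel p ?B)\<^sup>*" if "(j, c) \<in> (prel p V)\<^sup>*" for j
    using that
  proof (induction rule: converse_rtrancl_induct)
    case base
    then show ?case by auto
  next
    case (step j j')
    show ?case
    proof
      assume j: "j \<in> ?B"
      have jj: "j' = p j" using step(1) by (auto simp: prel_mem)
      have e: "(j, j') \<in> prel p ?B" using j jj by (auto simp: prel_mem)
      from block_step[OF p rV c j] jj have "j' = c \<or> j' \<in> ?B" by simp
      then show "(j, c) \<in> (prel p ?B)\<^sup>*"
      proof
        assume "j' = c" then show ?thesis using e by auto
      next
        assume "j' \<in> ?B"
        then have "(j', c) \<in> (prel p ?B)\<^sup>*" using step(3) by blast
        then show ?thesis using e by (meson converse_rtrancl_into_rtrancl)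
      qed
    qed
  qed
  then show ?thesis using ic i by auto
qed

lemma dec_in:
  assumes p: "p \<in> par r V" and rV: "r \<notin> V" and Vne: "V \<noteq> {}"
  shows "dec r V p \<in> decs r V"
proof -
  let ?C = "fib p V r"
  let ?\<pi> = "restrict (anc r V p) (V - ?C)"
  have Cne: "?C \<noteq> {}"
  proof -
    obtain i where "i \<in> V" using Vne by auto
    then obtain c where "c \<in> V" "p c = r" using anc_exists par_memD(3)[OF p] rV by blast
    then show ?thesis by (auto simp: fib_def)
  qed
  have \<pi>: "?\<pi> \<in> (V - ?C) \<rightarrow>\<^sub>E ?C" using anc_prop[OF p rV] by auto
  have "restrict p (blk (V - ?C) ?\<pi> c) \<in> par c (blk (V - ?C) ?\<pi> c)" if c: "c \<in> ?C" for c
  proof -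
    let ?B = "blk (V - ?C) ?\<pi> c"
    have "prel (restrict p ?B) ?B = prel p ?B" by (rule prel_cong) auto
    then show ?thesis using block_step[OF p rV c] block_reach[OF p rV c]
      by (auto simp: par_def PiE_iff)
  qed
  then show ?thesis using Cne \<pi> by (auto simp: dec_def decs_def Let_def fib_def)
qed

lemma glue_dec:
  assumes p: "p \<in> par r V" and rV: "r \<notin> V"
  shows "(case dec r V p of (C, \<pi>, ps) \<Rightarrow> glue V r C \<pi> ps) = p"
proof -
  let ?C = "fib p V r"
  let ?\<pi> = "restrict (anc r V p) (V - ?C)"
  have "glue V r ?C ?\<pi> (\<lambda>c\<in>?C. restrict p (blk (V - ?C) ?\<pi> c)) i = p i" for i
  proof -
    { assume i: "i \<in> V - ?C"
      then have "anc r V p i \<in> ?C" using anc_prop[OF p rV] by auto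
      then have ?thesis using i by (auto simp: glue_def blk_def) }
    then show ?thesis using par_memD(2)[OF p] by (auto simp: glue_def fib_def)
  qed
  then show ?thesis by (auto simp: dec_def Let_def)
qed

lemma dec_glue:
  assumes rV: "r \<notin> V" and d: "(C, \<pi>, ps) \<in> decs r V"
  shows "dec r V (glue V r C \<pi> ps) = (C, \<pi>, ps)"
proof -
  let ?g = "glue V r C \<pi> ps"
  have C: "C \<subseteq> V" and \<pi>: "\<pi> \<in> (V - C) \<rightarrow>\<^sub>E C"
    and ps: "\<And>c. c \<in> C \<Longrightarrow> ps c \<in> par c (blk (V - C) \<pi> c)"
    using d by (auto simp: decs_def)
  have gp: "?g \<in> par r V" by (rule glue_par[OF rV d])
  have fg: "fib ?g V r = C" by (rule fib_glue[OF rV d])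
  have anc: "anc r V ?g i = \<pi> i" if i: "i \<in> V - C" for i
  proof -
    let ?c = "\<pi> i" let ?B = "blk (V - C) \<pi> (\<pi> i)"
    have i': "i \<in> ?B" "?c \<in> C" using i \<pi> by (auto simp: blk_def)
    have "(i, ?c) \<in> (prel (ps ?c) ?B)\<^sup>*" using par_memD(3)[OF ps[OF i'(2)] i'(1)] .
    moreover have "prel (ps ?c) ?B \<subseteq> prel ?g V"
      by (rule prel_mono) (auto simp: blk_def glue_def)
    ultimately have "(i, ?c) \<in> (prel ?g V)\<^sup>*" using rtrancl_mono by blast
    then show ?thesis using anc_eq[OF gp rV, of i ?c] i i'(2) fg by auto
  qed
  have pie: "restrict (anc r V ?g) (V - C) = \<pi>"
    using anc \<pi> by (auto simp: PiE_iff extensional_def)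
  have "(\<lambda>c\<in>C. restrict ?g (blk (V - C) \<pi> c)) = ps"
  proof
    fix c show "(\<lambda>c\<in>C. restrict ?g (blk (V - C) \<pi> c)) c = ps c"
    proof (cases "c \<in> C")
      case True
      have "restrict ?g (blk (V - C) \<pi> c) = ps c"
      proof
        fix j show "restrict ?g (blk (V - C) \<pi> c) j = ps c j"
          using par_memD(2)[OF ps[OF True]] by (auto simp: glue_def blk_def)
      qed
      then show ?thesis using True by simp
    next
      case False then show ?thesis using d by (auto simp: decs_def PiE_iff extensional_def)
    qed
  qed
  then show ?thesis using fg pie by (simp add: dec_def Let_def)
qed

lemma bij_glue:
  assumes rV: "r \<notin> V" and Vne: "V \<noteq> {}"
  shows "bij_betw (\<lambda>(C, \<pi>, ps). glue V r C \<pi> ps) (decs r V) (par r V)"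
proof (rule bij_betwI[where g = "dec r V"])
  show "(\<lambda>(C, \<pi>, ps). glue V r C \<pi> ps) \<in> decs r V \<rightarrow> par r V"
    using glue_par[OF rV] by auto
  show "dec r V \<in> par r V \<rightarrow> decs r V" using dec_in[OF _ rV Vne] by auto
  show "dec r V (case x of (C, \<pi>, ps) \<Rightarrow> glue V r C \<pi> ps) = x" if "x \<in> decs r V" for x
    using dec_glue[OF rV] that by (cases x) auto
  show "(case dec r V y of (C, \<pi>, ps) \<Rightarrow> glue V r C \<pi> ps) = y" if "y \<in> par r V" for y
    using glue_dec[OF that rV] .
qed

lemma wt_glue:
  assumes rV: "r \<notin> V" and fin: "finite V" and d: "(C, \<pi>, ps) \<in> decs r V"
  shows "wt A B r V (glue V r C \<pi> ps) x =
     blockw A B (x r) C x * (\<Prod>c\<in>C. wt A B c (blk (V - C) \<pi> c) (ps c) x)"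
proof -
  let ?g = "glue V r C \<pi> ps"
  let ?B = "blk (V - C) \<pi>"
  have C: "C \<subseteq> V" and \<pi>: "\<pi> \<in> (V - C) \<rightarrow>\<^sub>E C"
    and ps: "\<And>c. c \<in> C \<Longrightarrow> ps c \<in> par c (?B c)"
    using d by (auto simp: decs_def)
  have finC: "finite C" using C fin finite_subset by blast
  have finB: "finite (?B c)" for c using fin by (auto simp: blk_def)
  have psval: "ps c i \<in> insert c (?B c)" if "c \<in> C" "i \<in> ?B c" for c i
    using par_memD(1)[OF ps[OF that(1)] that(2)] .
  have Vdec: "V = (\<Union>c\<in>C. insert c (?B c))"
    using C \<pi> by (auto simp: blk_def)
  have disj: "insert c (?B c) \<inter> insert c' (?B c') = {}" if "c \<in> C" "c' \<in> C" "c \<noteq> c'" for c c'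
    using that by (auto simp: blk_def)
  have fibk: "fib ?g V k = fib (ps c) (?B c) k" if c: "c \<in> C" and k: "k \<in> insert c (?B c)" for c k
  proof
    show "fib ?g V k \<subseteq> fib (ps c) (?B c) k"
    proof
      fix i assume i: "i \<in> fib ?g V k"
      then have iV: "i \<in> V" and gi: "?g i = k" by (auto simp: fib_def)
      have kV: "k \<in> V" using k c C by (auto simp: blk_def)
      have iC: "i \<notin> C" using gi kV rV by (auto simp: glue_def)
      then have i': "i \<in> ?B (\<pi> i)" "\<pi> i \<in> C" using iV \<pi> by (auto simp: blk_def)
      have gi2: "?g i = ps (\<pi> i) i" using iC iV by (auto simp: glue_def)
      have "\<pi> i = c"
      proof (rule ccontr)
        assume "\<pi> i \<noteq> c"
        then have "insert (\<pi> i) (?B (\<pi> i)) \<inter> insert c (?B c) = {}" using disj i'(2) c by blast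
        moreover have "k \<in> insert (\<pi> i) (?B (\<pi> i))" using psval[OF i'(2) i'(1)] gi gi2 by simp
        ultimately show False using k by blast
      qed
      then show "i \<in> fib (ps c) (?B c) k" using i' gi gi2 by (auto simp: fib_def)
    qed
  next
    show "fib (ps c) (?B c) k \<subseteq> fib ?g V k"
      using c by (auto simp: fib_def glue_def blk_def)
  qed
  have fibr: "fib ?g V r = C" by (rule fib_glue[OF rV d])
  have rnot: "r \<notin> (\<Union>c\<in>C. insert c (?B c))" using rV Vdec by blast
  have "wt A B r V ?g x = blockw A B (x r) (fib ?g V r) x *
      (\<Prod>k\<in>(\<Union>c\<in>C. insert c (?B c)). blockw A B (x k) (fib ?g V k) x)"
    unfolding wt_def using rnot finB finC by (subst Vdec, subst prod.insert) auto
  also have "(\<Prod>k\<in>(\<Union>c\<in>C. insert c (?B c)). blockw A B (x k) (fib ?g V k) x) =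
      (\<Prod>c\<in>C. \<Prod>k\<in>insert c (?B c). blockw A B (x k) (fib ?g V k) x)"
    by (rule prod.UNION_disjoint) (use finC finB disj in auto)
  also have "\<dots> = (\<Prod>c\<in>C. wt A B c (?B c) (ps c) x)"
    unfolding wt_def by (rule prod.cong[OF refl], rule prod.cong[OF refl]) (simp add: fibk)
  finally show ?thesis using fibr by simp
qed

lemma finite_decs: "finite V \<Longrightarrow> finite (decs r V)"
  unfolding decs_def
  by (intro finite_SigmaI finite_PiE finite_par) (auto intro: finite_subset simp: blk_def)

lemma sum_par_decomp:
  assumes rV: "r \<notin> V" and fin: "finite V" and Vne: "V \<noteq> {}"
  shows "(\<Sum>p\<in>par r V. wt A B r V p x) =
    (\<Sum>C\<in>{C. C \<subseteq> V \<and> C \<noteq> {}}. \<Sum>\<pi>\<in>(V - C) \<rightarrow>\<^sub>E C.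
       blockw A B (x r) C x * (\<Prod>c\<in>C. \<Sum>q\<in>par c (blk (V - C) \<pi> c). wt A B c (blk (V - C) \<pi> c) q x))"
proof -
  have finB: "finite (blk S \<pi> c)" if "finite S" for S \<pi> c using that by (auto simp: blk_def)
  have finCs: "finite {C. C \<subseteq> V \<and> C \<noteq> {}}" using fin by (auto intro: finite_subset[of _ "Pow V"])
  have "(\<Sum>p\<in>par r V. wt A B r V p x) = (\<Sum>d\<in>decs r V. wt A B r V ((\<lambda>(C, \<pi>, ps). glue V r C \<pi> ps) d) x)"
    using sum.reindex_bij_betw[OF bij_glue[OF rV Vne], of "\<lambda>p. wt A B r V p x"] by simp
  also have "\<dots> = (\<Sum>d\<in>decs r V. (case d of (C, \<pi>, ps) \<Rightarrow>
        blockw A B (x r) C x * (\<Prod>c\<in>C. wt A B c (blk (V - C) \<pi> c) (ps c) x)))"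
    by (rule sum.cong[OF refl]) (auto simp: wt_glue[OF rV fin])
  also have "\<dots> = (\<Sum>C\<in>{C. C \<subseteq> V \<and> C \<noteq> {}}. \<Sum>\<pi>\<in>(V - C) \<rightarrow>\<^sub>E C. \<Sum>ps\<in>Pi\<^sub>E C (\<lambda>c. par c (blk (V - C) \<pi> c)).
        blockw A B (x r) C x * (\<Prod>c\<in>C. wt A B c (blk (V - C) \<pi> c) (ps c) x))"
    unfolding decs_def
    apply (subst sum.Sigma[symmetric])
      apply (rule finCs)
     apply (auto intro!: finite_SigmaI finite_PiE finite_par finB intro: finite_subset simp: fin)[1]
    apply (rule sum.cong[OF refl])
    apply (subst sum.Sigma[symmetric])
      apply (auto intro!: finite_PiE finite_par finB intro: finite_subset simp: fin)
    done
  also have "\<dots> = (\<Sum>C\<in>{C. C \<subseteq> V \<and> C \<noteq> {}}. \<Sum>\<pi>\<in>(V - C) \<rightarrow>\<^sub>E C.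
       blockw A B (x r) C x * (\<Prod>c\<in>C. \<Sum>q\<in>par c (blk (V - C) \<pi> c). wt A B c (blk (V - C) \<pi> c) q x))"
  proof (intro sum.cong refl)
    fix C \<pi> assume C: "C \<in> {C. C \<subseteq> V \<and> C \<noteq> {}}"
    have finC: "finite C" using C fin finite_subset by blast
    show "(\<Sum>ps\<in>Pi\<^sub>E C (\<lambda>c. par c (blk (V - C) \<pi> c)).
        blockw A B (x r) C x * (\<Prod>c\<in>C. wt A B c (blk (V - C) \<pi> c) (ps c) x)) =
      blockw A B (x r) C x * (\<Prod>c\<in>C. \<Sum>q\<in>par c (blk (V - C) \<pi> c). wt A B c (blk (V - C) \<pi> c) q x)"
      by (subst prod_sum_PiE) (auto simp: sum_distrib_left finC finite_par finB fin)
  qed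
  finally show ?thesis .
qed


lemma par_empty: "par r {} = {\<lambda>_. undefined}"
  by (auto simp: par_def)

lemma wt_empty: "wt A B r {} p x = 1"
  by (simp add: wt_def blockw_def fib_def pairs_def)

lemma pairs_relabel:
  assumes inj: "inj_on h S" and sym: "\<And>a b. g a b = g b a"
  shows "(\<Prod>q\<in>pairs (h ` S). g (fst q) (snd q)) = (\<Prod>q\<in>pairs S. g (h (fst q)) (h (snd q)))"
proof -
  define \<tau> where "\<tau> = (\<lambda>(i::nat, j::nat). if h i < h j then (h i, h j) else (h j, h i))"
  have bij: "bij_betw \<tau> (pairs S) (pairs (h ` S))"
  proof (rule bij_betw_imageI)
    show "inj_on \<tau> (pairs S)"
    proof (rule inj_onI)
      fix a b assume a: "a \<in> pairs S" and b: "b \<in> pairs S" and e: "\<tau> a = \<tau> b"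
      obtain i j where ij: "a = (i, j)" "i \<in> S" "j \<in> S" "i < j" using a by (auto simp: pairs_def)
      obtain i' j' where ij': "b = (i', j')" "i' \<in> S" "j' \<in> S" "i' < j'" using b by (auto simp: pairs_def)
      have "{h i, h j} = {h i', h j'}" using e ij ij' by (auto simp: \<tau>_def split: if_splits)
      then have "(h i = h i' \<and> h j = h j') \<or> (h i = h j' \<and> h j = h i')"
        by (simp add: doubleton_eq_iff)
      then have "(i = i' \<and> j = j') \<or> (i = j' \<and> j = i')"
        using ij ij' by (simp add: inj_on_eq_iff[OF inj])
      then show "a = b" using ij ij' by auto
    qed
    show "\<tau> ` pairs S = pairs (h ` S)"
    proof
      show "\<tau> ` pairs S \<subseteq> pairs (h ` S)"
      proof
        fix q assume "q \<in> \<tau> ` pairs S"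
        then obtain i j where ij: "q = \<tau> (i, j)" "i \<in> S" "j \<in> S" "i < j" by (auto simp: pairs_def)
        have "h i \<noteq> h j" using inj ij unfolding inj_on_def by auto
        then show "q \<in> pairs (h ` S)" using ij by (auto simp: \<tau>_def pairs_def)
      qed
      show "pairs (h ` S) \<subseteq> \<tau> ` pairs S"
      proof
        fix q assume "q \<in> pairs (h ` S)"
        then obtain i j where ij: "q = (h i, h j)" "i \<in> S" "j \<in> S" "h i < h j" by (auto simp: pairs_def)
        then have "i \<noteq> j" by auto
        then consider "i < j" | "j < i" by linarith
        then show "q \<in> \<tau> ` pairs S"
        proof cases
          case 1 then show ?thesis using ij by (auto simp: \<tau>_def pairs_def intro!: image_eqI[of _ _ "(i, j)"])
        next
          case 2 then show ?thesis using ij by (auto simp: \<tau>_def pairs_def intro!: image_eqI[of _ _ "(j, i)"])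
        qed
      qed
    qed
  qed
  have "(\<Prod>q\<in>pairs (h ` S). g (fst q) (snd q)) = (\<Prod>q\<in>pairs S. g (fst (\<tau> q)) (snd (\<tau> q)))"
    using prod.reindex_bij_betw[OF bij, of "\<lambda>q. g (fst q) (snd q)"] by simp
  also have "\<dots> = (\<Prod>q\<in>pairs S. g (h (fst q)) (h (snd q)))"
    by (rule prod.cong) (auto simp: \<tau>_def sym)
  finally show ?thesis .
qed

lemma blockw_relabel:
  assumes inj: "inj_on h S" and sym: "\<And>a b. B a b = B b a"
  shows "blockw A B y (h ` S) x = blockw A B y S (x \<circ> h)"
  unfolding blockw_def
  using pairs_relabel[OF inj, of "\<lambda>a b. B (x a) (x b)"] sym prod.reindex[OF inj, of "\<lambda>i. A y (x i)"]
  by simp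

definition pconj :: "(nat \<Rightarrow> nat) \<Rightarrow> (nat \<Rightarrow> nat) \<Rightarrow> nat set \<Rightarrow> (nat \<Rightarrow> nat) \<Rightarrow> nat \<Rightarrow> nat" where
  "pconj h g V' p = (\<lambda>i'\<in>V'. h (p (g i')))"

locale relab =
  fixes h g :: "nat \<Rightarrow> nat" and r r' :: nat and V V' :: "nat set"
  assumes rV: "r \<notin> V" and rV': "r' \<notin> V'" and hr: "h r = r'" and gr: "g r' = r"
    and hV: "h ` V = V'" and gV: "g ` V' = V"
    and gh: "\<And>i. i \<in> insert r V \<Longrightarrow> g (h i) = i" and hg: "\<And>i. i \<in> insert r' V' \<Longrightarrow> h (g i) = i"
begin

lemma inj_h: "inj_on h (insert r V)"
  by (metis gh inj_on_inverseI)

lemma conj_par: "p \<in> par r V \<Longrightarrow> pconj h g V' p \<in> par r' V'"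
proof -
  assume p: "p \<in> par r V"
  let ?p' = "pconj h g V' p"
  have gi: "g i' \<in> V" if "i' \<in> V'" for i' using that gV by auto
  have vals: "?p' i' \<in> insert r' V'" if "i' \<in> V'" for i'
    using par_memD(1)[OF p gi[OF that]] that hV hr by (auto simp: pconj_def)
  have "(h a, h b) \<in> (prel ?p' V')\<^sup>*" if "(a, b) \<in> (prel p V)\<^sup>*" for a b
    using that
  proof (induction rule: rtrancl_induct)
    case (step b c)
    then have b: "b \<in> V" "c = p b" by (auto simp: prel_mem)
    have "(h b, h c) \<in> prel ?p' V'" using b hV gh by (auto simp: prel_mem pconj_def)
    then show ?case using step(3) by auto
  qed auto
  then have "(i', r') \<in> (prel ?p' V')\<^sup>*" if "i' \<in> V'" for i'
    using par_memD(3)[OF p gi[OF that]] hg that hr by fastforce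
  then show ?thesis using vals by (auto simp: par_def pconj_def)
qed

lemma fib_conj:
  assumes p: "p \<in> par r V" and k: "k \<in> insert r V"
  shows "fib (pconj h g V' p) V' (h k) = h ` fib p V k"
proof
  show "fib (pconj h g V' p) V' (h k) \<subseteq> h ` fib p V k"
  proof
    fix i' assume "i' \<in> fib (pconj h g V' p) V' (h k)"
    then have i': "i' \<in> V'" "h (p (g i')) = h k" by (auto simp: fib_def pconj_def)
    have giV: "g i' \<in> V" using i' gV by auto
    have "p (g i') = k" using inj_h i' par_memD(1)[OF p giV] k unfolding inj_on_def by auto
    moreover have "i' = h (g i')" using hg i' by auto
    ultimately show "i' \<in> h ` fib p V k" using giV by (auto simp: fib_def)
  qed
  show "h ` fib p V k \<subseteq> fib (pconj h g V' p) V' (h k)"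
  proof
    fix i' assume "i' \<in> h ` fib p V k"
    then obtain i where i: "i \<in> V" "p i = k" "i' = h i" by (auto simp: fib_def)
    have "g (h i) = i" using gh i(1) by auto
    then show "i' \<in> fib (pconj h g V' p) V' (h k)" using i hV by (auto simp: fib_def pconj_def)
  qed
qed

lemma wt_conj:
  assumes p: "p \<in> par r V" and sym: "\<And>a b. B a b = B b a"
  shows "wt A B r' V' (pconj h g V' p) x = wt A B r V p (x \<circ> h)"
proof -
  have img: "h ` insert r V = insert r' V'" using hV hr by auto
  have "wt A B r' V' (pconj h g V' p) x = (\<Prod>k\<in>insert r V. blockw A B (x (h k)) (fib (pconj h g V' p) V' (h k)) x)"
    unfolding wt_def by (subst img[symmetric], subst prod.reindex[OF inj_h]) simp
  also have "\<dots> = (\<Prod>k\<in>insert r V. blockw A B (x (h k)) (fib p V k) (x \<circ> h))"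
  proof (rule prod.cong[OF refl])
    fix k assume k: "k \<in> insert r V"
    have "inj_on h (fib p V k)" using inj_h by (rule inj_on_subset) (auto simp: fib_def)
    then show "blockw A B (x (h k)) (fib (pconj h g V' p) V' (h k)) x = blockw A B (x (h k)) (fib p V k) (x \<circ> h)"
      using fib_conj[OF p k] blockw_relabel sym by metis
  qed
  also have "\<dots> = wt A B r V p (x \<circ> h)" by (simp add: wt_def)
  finally show ?thesis .
qed

end

lemma relab_sym: "relab h g r r' V V' \<Longrightarrow> relab g h r' r V' V"
  unfolding relab_def by auto

lemma bij_conj:
  assumes "relab h g r r' V V'"
  shows "bij_betw (pconj h g V') (par r V) (par r' V')"
proof (rule bij_betwI[where g = "pconj g h V"])
  interpret R: relab h g r r' V V' by fact
  interpret S: relab g h r' r V' V by (rule relab_sym) fact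
  show "pconj h g V' \<in> par r V \<rightarrow> par r' V'" using R.conj_par by auto
  show "pconj g h V \<in> par r' V' \<rightarrow> par r V" using S.conj_par by auto
  show "pconj g h V (pconj h g V' p) = p" if p: "p \<in> par r V" for p
  proof
    fix i show "pconj g h V (pconj h g V' p) i = p i"
    proof (cases "i \<in> V")
      case True
      have hi: "h i \<in> V'" using True R.hV by auto
      have "g (h i) = i" using R.gh True by auto
      moreover have "p i \<in> insert r V" using par_memD(1)[OF p True] .
      ultimately show ?thesis using hi True R.gh by (simp add: pconj_def)
    qed (simp add: pconj_def par_memD(2)[OF p])
  qed
  show "pconj h g V' (pconj g h V p) = p" if p: "p \<in> par r' V'" for p
  proof
    fix i show "pconj h g V' (pconj g h V p) i = p i"
    proof (cases "i \<in> V'")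
      case True
      have hi: "g i \<in> V" using True R.gV by auto
      have "h (g i) = i" using R.hg True by auto
      moreover have "p i \<in> insert r' V'" using par_memD(1)[OF p True] .
      ultimately show ?thesis using hi True R.hg by (simp add: pconj_def)
    qed (simp add: pconj_def par_memD(2)[OF p])
  qed
qed

lemma sum_wt_relabel:
  assumes R: "relab h g r r' V V'" and sym: "\<And>a b. B a b = B b a"
  shows "(\<Sum>p\<in>par r' V'. wt A B r' V' p x) = (\<Sum>p\<in>par r V. wt A B r V p (x \<circ> h))"
proof -
  interpret R: relab h g r r' V V' by fact
  have "(\<Sum>p\<in>par r' V'. wt A B r' V' p x) = (\<Sum>p\<in>par r V. wt A B r' V' (pconj h g V' p) x)"
    using sum.reindex_bij_betw[OF bij_conj[OF R], of "\<lambda>p. wt A B r' V' p x"] by simp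
  also have "\<dots> = (\<Sum>p\<in>par r V. wt A B r V p (x \<circ> h))"
    by (rule sum.cong[OF refl]) (rule R.wt_conj[OF _ sym])
  finally show ?thesis .
qed

lemma wt_cong:
  assumes "\<And>i. i \<in> insert r V \<Longrightarrow> x i = y i" "p \<in> par r V"
  shows "wt A B r V p x = wt A B r V p y"
proof -
  have "blockw A B (x k) (fib p V k) x = blockw A B (y k) (fib p V k) y" if "k \<in> insert r V" for k
    using assms that unfolding blockw_def
    by (intro arg_cong2[where f="(*)"] prod.cong) (auto simp: fib_def pairs_def)
  then show ?thesis by (simp add: wt_def)
qed


definition srel :: "nat set set \<Rightarrow> (nat \<times> nat) set" where
  "srel E = {(x, y). {x, y} \<in> E}"

lemma reach_srel: "reach E a b \<longleftrightarrow> (a, b) \<in> (srel E)\<^sup>*"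
  by (simp add: reach_def srel_def)

lemma srel_sym: "(a, b) \<in> srel E \<Longrightarrow> (b, a) \<in> srel E"
  by (auto simp: srel_def insert_commute)

lemma reach_sym: "reach E a b \<Longrightarrow> reach E b a"
proof -
  have "sym (srel E)" using srel_sym by (auto intro: symI)
  then have "sym ((srel E)\<^sup>*)" by (rule sym_rtrancl)
  then show "reach E a b \<Longrightarrow> reach E b a" by (auto simp: reach_srel dest: symD)
qed

lemma reach_trans: "reach E a b \<Longrightarrow> reach E b c \<Longrightarrow> reach E a c"
  by (simp add: reach_srel)

lemma reach_refl: "reach E a a"
  by (simp add: reach_srel)

lemma reach_edge: "{a, b} \<in> E \<Longrightarrow> reach E a b"
  by (auto simp: reach_srel srel_def)

lemma reach_mono: "E \<subseteq> E' \<Longrightarrow> reach E a b \<Longrightarrow> reach E' a b"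
proof -
  assume "E \<subseteq> E'"
  then have "srel E \<subseteq> srel E'" by (auto simp: srel_def)
  then show "reach E a b \<Longrightarrow> reach E' a b" by (auto simp: reach_srel dest: rtrancl_mono)
qed

lemma reach_remove:
  assumes "reach E a b"
  shows "reach (E - {e}) a b \<or> (\<exists>x\<in>e. reach (E - {e}) a x)"
  using assms unfolding reach_srel
proof (induction rule: rtrancl_induct)
  case base then show ?case by auto
next
  case (step y z)
  show ?case
  proof (cases "{y, z} = e")
    case True
    then show ?thesis using step(3) by (auto simp: reach_srel)
  next
    case False
    then have "(y, z) \<in> srel (E - {e})" using step(2) by (auto simp: srel_def)
    then show ?thesis using step(3) by (auto simp: reach_srel)
  qed
qed

lemma reach_remove_len:
  assumes "(a, b) \<in> (srel E) ^^ m"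
  shows "reach (E - {e}) a b \<or> (\<forall>y\<in>e. \<exists>j\<le>m. (a, y) \<in> (srel E) ^^ j)"
  using assms
proof (induction m arbitrary: b)
  case 0 then show ?case by (auto simp: reach_refl)
next
  case (Suc m)
  then obtain c where c: "(a, c) \<in> (srel E) ^^ m" "(c, b) \<in> srel E" by auto
  from Suc.IH[OF c(1)] show ?case
  proof
    assume h: "reach (E - {e}) a c"
    show ?thesis
    proof (cases "{c, b} = e")
      case True
      have ab: "(a, b) \<in> (srel E) ^^ Suc m" using c by auto
      have "\<forall>y\<in>e. \<exists>j\<le>Suc m. (a, y) \<in> (srel E) ^^ j"
      proof
        fix y assume "y \<in> e"
        then have "y = c \<or> y = b" using True by auto
        then show "\<exists>j\<le>Suc m. (a, y) \<in> (srel E) ^^ j"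
          using ab c(1) le_SucI[of m m] by blast
      qed
      then show ?thesis by blast
    next
      case False
      then have "(c, b) \<in> srel (E - {e})" using c(2) by (auto simp: srel_def)
      then have "reach (E - {e}) a b" using h unfolding reach_srel by (rule rtrancl_into_rtrancl[rotated])
      then show ?thesis by blast
    qed
  next
    assume "\<forall>y\<in>e. \<exists>j\<le>m. (a, y) \<in> (srel E) ^^ j"
    then show ?thesis using le_SucI by blast
  qed
qed

lemma reach_closed:
  assumes "reach E a b" "a \<in> D" "\<And>u w. {u, w} \<in> E \<Longrightarrow> u \<in> D \<Longrightarrow> w \<in> D"
  shows "b \<in> D"
  using assms(1,2) unfolding reach_srel
  by (induction rule: rtrancl_induct) (auto simp: srel_def intro: assms(3))

definition edges :: "(nat \<Rightarrow> nat) \<Rightarrow> nat set \<Rightarrow> nat set set" where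
  "edges p V = {{i, p i} | i. i \<in> V}"

lemma nocycle:
  assumes p: "p \<in> par r V" and rV: "r \<notin> V" and i: "i \<in> V" and c: "(p i, i) \<in> (prel p V)\<^sup>*"
  shows False
proof -
  have "(b, i) \<in> (prel p V)\<^sup>*" if "(i, b) \<in> (prel p V)\<^sup>*" for b
    using that
  proof (induction rule: rtrancl_induct)
    case base then show ?case by auto
  next
    case (step b c')
    have c': "b \<in> V" "c' = p b" using step(2) by (auto simp: prel_mem)
    show ?case
    proof (cases "b = i")
      case True then show ?thesis using c c' by simp
    next
      case False
      then obtain y where "(b, y) \<in> prel p V" "(y, i) \<in> (prel p V)\<^sup>*"
        using step(3) by (metis converse_rtranclE)
      then show ?thesis using c' by (auto simp: prel_mem)
    qed
  qed
  then have "(r, i) \<in> (prel p V)\<^sup>*" using par_memD(3)[OF p i] by blast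
  then have "i = r" using noescape rV by blast
  then show False using i rV by auto
qed

context
  fixes p :: "nat \<Rightarrow> nat" and n :: nat
  assumes p: "p \<in> par 0 {1..n}"
begin

abbreviation "VV \<equiv> {1..n::nat}"
abbreviation "RR \<equiv> prel p {1..n}"

lemma z_notin: "(0::nat) \<notin> VV" by auto

lemma pval: "i \<in> VV \<Longrightarrow> p i \<in> {0..n}"
  using par_memD(1)[OF p] by fastforce

lemma p_neq: "i \<in> VV \<Longrightarrow> p i \<noteq> i"
  using nocycle[OF p z_notin, of i] by auto

definition DD :: "nat \<Rightarrow> nat set" where "DD i = {j. (j, i) \<in> RR\<^sup>*}"

lemma DD_closed:
  assumes i: "i \<in> VV" and j: "j \<in> VV" and ne: "{j, p j} \<noteq> {i, p i}"
  shows "j \<in> DD i \<longleftrightarrow> p j \<in> DD i"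
proof
  assume "j \<in> DD i"
  then have h: "(j, i) \<in> RR\<^sup>*" by (simp add: DD_def)
  have "j \<noteq> i" using ne by auto
  then obtain y where "(j, y) \<in> RR" "(y, i) \<in> RR\<^sup>*" using h by (metis converse_rtranclE)
  then show "p j \<in> DD i" by (auto simp: DD_def prel_mem)
next
  assume "p j \<in> DD i"
  then have "(p j, i) \<in> RR\<^sup>*" by (simp add: DD_def)
  moreover have "(j, p j) \<in> RR" using j by (simp add: prel_mem)
  ultimately show "j \<in> DD i" by (auto simp: DD_def)
qed

lemma DD_facts:
  assumes i: "i \<in> VV"
  shows "i \<in> DD i" "p i \<notin> DD i" "0 \<notin> DD i"
proof -
  show "i \<in> DD i" by (simp add: DD_def)
  show "p i \<notin> DD i" using nocycle[OF p z_notin i] by (auto simp: DD_def)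
  show "0 \<notin> DD i"
  proof
    assume "0 \<in> DD i"
    then have "i = 0" using noescape[of 0 i p VV] by (auto simp: DD_def)
    then show False using i by auto
  qed
qed

lemma edge_closed:
  assumes i: "i \<in> VV" and e: "{u, w} \<in> edges p VV - {{i, p i}}" and u: "u \<in> DD i"
  shows "w \<in> DD i"
proof -
  obtain j where j: "j \<in> VV" "{u, w} = {j, p j}" using e by (auto simp: edges_def)
  have ne: "{j, p j} \<noteq> {i, p i}" using e j by auto
  from DD_closed[OF i j(1) ne] j(2) u show ?thesis by (auto simp: doubleton_eq_iff)
qed

lemma edges_tree: "edges p VV \<in> trees n"
proof -
  have a: "e \<subseteq> {0..n} \<and> card e = 2" if "e \<in> edges p VV" for e
    using that pval p_neq by (fastforce simp: edges_def card_insert_if)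
  have b: "reach (edges p VV) 0 i" if "i \<in> {0..n}" for i
  proof (cases "i = 0")
    case True then show ?thesis by (simp add: reach_refl)
  next
    case False
    then have "i \<in> VV" using that by auto
    then have "(i, 0) \<in> RR\<^sup>*" using par_memD(3)[OF p] by auto
    moreover have "RR \<subseteq> srel (edges p VV)" by (auto simp: prel_def srel_def edges_def)
    ultimately have "reach (edges p VV) i 0" by (auto simp: reach_srel dest: rtrancl_mono)
    then show ?thesis by (rule reach_sym)
  qed
  have c: "\<not> reach (edges p VV - {e}) a b" if eE: "e \<in> edges p VV" and eab: "e = {a, b}" for e a b
  proof
    assume r: "reach (edges p VV - {e}) a b"
    obtain i where i: "i \<in> VV" "e = {i, p i}" using eE by (auto simp: edges_def)
    have cl: "\<And>u w. {u, w} \<in> edges p VV - {e} \<Longrightarrow> u \<in> DD i \<Longrightarrow> w \<in> DD i"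
      using edge_closed[OF i(1)] i(2) by blast
    have r2: "reach (edges p VV - {e}) b a" using r by (rule reach_sym)
    have ab: "b \<in> DD i" if "a \<in> DD i" using r that cl by (rule reach_closed)
    have ba: "a \<in> DD i" if "b \<in> DD i" using r2 that cl by (rule reach_closed)
    have "a \<in> DD i \<longleftrightarrow> b \<in> DD i" using ab ba by blast
    moreover have "{a, b} = {i, p i}" using eab i by simp
    ultimately show False using DD_facts[OF i(1)] by (auto simp: doubleton_eq_iff)
  qed
  show ?thesis using a b c by (auto simp: trees_def)
qed

lemma children_edges: "children (edges p VV) k = fib p VV k"
proof
  show "children (edges p VV) k \<subseteq> fib p VV k"
  proof
    fix i assume "i \<in> children (edges p VV) k"
    then have e: "{k, i} \<in> edges p VV" and r: "reach (edges p VV - {{k, i}}) 0 k"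
      by (auto simp: children_def)
    obtain j where j: "j \<in> VV" "{k, i} = {j, p j}" using e by (auto simp: edges_def)
    show "i \<in> fib p VV k"
    proof (cases "i = j")
      case True then show ?thesis using j by (auto simp: fib_def doubleton_eq_iff)
    next
      case False
      then have kj: "k = j" "i = p j" using j(2) by (auto simp: doubleton_eq_iff)
      have cl: "\<And>u w. {u, w} \<in> edges p VV - {{k, i}} \<Longrightarrow> u \<in> DD j \<Longrightarrow> w \<in> DD j"
        using edge_closed[OF j(1)] kj by blast
      have r2: "reach (edges p VV - {{k, i}}) k 0" using r by (rule reach_sym)
      have "k \<in> DD j" using DD_facts(1)[OF j(1)] kj by simp
      have "0 \<in> DD j" using r2 \<open>k \<in> DD j\<close> cl by (rule reach_closed)
      then show ?thesis using DD_facts(3)[OF j(1)] by simp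
    qed
  qed
  show "fib p VV k \<subseteq> children (edges p VV) k"
  proof
    fix i assume "i \<in> fib p VV k"
    then have i: "i \<in> VV" "p i = k" by (auto simp: fib_def)
    have e: "{k, i} \<in> edges p VV" using i by (auto simp: edges_def insert_commute)
    let ?E = "edges p VV - {{k, i}}"
    have "j \<notin> DD i \<longrightarrow> reach ?E j 0" if "(j, 0) \<in> RR\<^sup>*" for j
      using that
    proof (induction rule: converse_rtrancl_induct)
      case base then show ?case by (simp add: reach_refl)
    next
      case (step j j')
      show ?case
      proof
        assume jD: "j \<notin> DD i"
        have jj: "j \<in> VV" "j' = p j" using step(1) by (auto simp: prel_mem)
        have j'D: "j' \<notin> DD i"
        proof
          assume "j' \<in> DD i"
          then have "(j, i) \<in> RR\<^sup>*" using step(1) by (auto simp: DD_def)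
          then show False using jD by (simp add: DD_def)
        qed
        have ne: "{j, j'} \<noteq> {k, i}"
        proof
          assume "{j, j'} = {k, i}"
          then consider "j = i" | "j = k" "j' = i" by (auto simp: doubleton_eq_iff)
          then show False
          proof cases
            case 1 then show False using jD DD_facts(1)[OF i(1)] by simp
          next
            case 2
            then have "(j, i) \<in> RR" using jj by (simp add: prel_mem)
            then show False using jD by (auto simp: DD_def)
          qed
        qed
        have "{j, j'} \<in> ?E" using jj ne by (auto simp: edges_def)
        then have "reach ?E j j'" by (rule reach_edge)
        then show "reach ?E j 0" using step(3) j'D reach_trans by blast
      qed
    qed
    moreover have "(k, 0) \<in> RR\<^sup>*"
    proof (cases "k = 0")
      case False
      then have "k \<in> VV" using pval[OF i(1)] i(2) by auto
      then show ?thesis using par_memD(3)[OF p] by auto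
    qed simp
    moreover have "k \<notin> DD i" using DD_facts(2)[OF i(1)] i(2) by simp
    ultimately have "reach ?E k 0" by blast
    then show "i \<in> children (edges p VV) k" using e by (auto simp: children_def intro: reach_sym)
  qed
qed

end


definition tdist :: "nat set set \<Rightarrow> nat \<Rightarrow> nat" where
  "tdist T i = (LEAST m. (0, i) \<in> (srel T) ^^ m)"

definition psi :: "nat \<Rightarrow> nat set set \<Rightarrow> nat \<Rightarrow> nat" where
  "psi n T = restrict (\<lambda>i. THE k. i \<in> children T k) {1..n}"

context
  fixes T :: "nat set set" and n :: nat
  assumes T: "T \<in> trees n"
begin

lemma T_edge: "e \<in> T \<Longrightarrow> e \<subseteq> {0..n} \<and> card e = 2"
  using T by (auto simp: trees_def)

lemma T_conn: "i \<in> {0..n} \<Longrightarrow> reach T 0 i"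
  using T by (auto simp: trees_def)

lemma T_bridge: "{a, b} \<in> T \<Longrightarrow> \<not> reach (T - {{a, b}}) a b"
  using T unfolding trees_def by blast

lemma children_unique:
  assumes ik: "i \<in> children T k" and ik': "i \<in> children T k'"
  shows "k = k'"
proof (rule ccontr)
  assume kk: "k \<noteq> k'"
  let ?e = "{k, i}" let ?e' = "{k', i}"
  have e: "?e \<in> T" and r1: "reach (T - {?e}) 0 k" using ik by (auto simp: children_def)
  have e': "?e' \<in> T" and r2: "reach (T - {?e'}) 0 k'" using ik' by (auto simp: children_def)
  have ne: "?e \<noteq> ?e'" using kk by (auto simp: doubleton_eq_iff)
  have b1: "\<not> reach (T - {?e}) k i" using T_bridge[OF e] .
  have b2: "\<not> reach (T - {?e'}) k' i" using T_bridge[OF e'] .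
  have s1: "reach (T - {?e}) k' i" using e' ne by (intro reach_edge) auto
  have s2: "reach (T - {?e'}) k i" using e ne by (intro reach_edge) auto
  from reach_remove[OF r1, of ?e']
  show False
  proof
    assume "reach (T - {?e} - {?e'}) 0 k"
    then have "reach (T - {?e'}) 0 k" by (rule reach_mono[rotated]) auto
    then have "reach (T - {?e'}) k' i"
      using r2 s2 by (meson reach_sym reach_trans)
    then show False using b2 by simp
  next
    assume "\<exists>x\<in>?e'. reach (T - {?e} - {?e'}) 0 x"
    then obtain x where x: "x \<in> ?e'" "reach (T - {?e}) 0 x"
      using reach_mono[of "T - {?e} - {?e'}" "T - {?e}"] by blast
    show False
    proof (cases "x = i")
      case True
      then have "reach (T - {?e}) k i" using r1 x by (meson reach_sym reach_trans)
      then show False using b1 by simp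
    next
      case False
      then have "x = k'" using x by auto
      then have "reach (T - {?e}) k i" using r1 x s1 by (meson reach_sym reach_trans)
      then show False using b1 by simp
    qed
  qed
qed

lemma children_sub: "i \<in> children T k \<Longrightarrow> i \<in> {0..n} \<and> k \<in> {0..n} \<and> {k, i} \<in> T"
proof -
  assume "i \<in> children T k"
  then have e: "{k, i} \<in> T" by (auto simp: children_def)
  then have "{k, i} \<subseteq> {0..n}" using T_edge by blast
  then show ?thesis using e by auto
qed

lemma parent_exists:
  assumes i: "i \<in> {1..n}"
  shows "\<exists>k. i \<in> children T k \<and> tdist T k < tdist T i"
proof -
  have "reach T 0 i" using T_conn i by auto
  then obtain m where "(0, i) \<in> (srel T) ^^ m" by (auto simp: reach_srel dest: rtrancl_power[THEN iffD1])
  then have d: "(0, i) \<in> (srel T) ^^ tdist T i" unfolding tdist_def by (rule LeastI)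
  have "tdist T i \<noteq> 0"
  proof
    assume "tdist T i = 0" then show False using d i by simp
  qed
  then obtain m where m: "tdist T i = Suc m" by (cases "tdist T i") auto
  then obtain k where k: "(0, k) \<in> (srel T) ^^ m" "(k, i) \<in> srel T" using d by auto
  have dk: "tdist T k \<le> m" unfolding tdist_def using k(1) by (rule Least_le)
  from reach_remove_len[OF k(1), of "{k, i}"]
  have "reach (T - {{k, i}}) 0 k"
  proof
    assume "\<forall>y\<in>{k, i}. \<exists>j\<le>m. (0, y) \<in> (srel T) ^^ j"
    then obtain j where j: "j \<le> m" "(0, i) \<in> (srel T) ^^ j" by auto
    have "tdist T i \<le> j" unfolding tdist_def using j(2) by (rule Least_le)
    then show ?thesis using j m by simp
  qed
  then have "i \<in> children T k" using k(2) by (auto simp: children_def srel_def)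
  then show ?thesis using dk m by auto
qed

lemma psi_children: "i \<in> {1..n} \<Longrightarrow> i \<in> children T (psi n T i)"
proof -
  assume i: "i \<in> {1..n}"
  obtain k where "i \<in> children T k" using parent_exists[OF i] by auto
  then have "\<exists>!k. i \<in> children T k" using children_unique by blast
  then show ?thesis using i unfolding psi_def by (auto intro: theI')
qed

lemma psi_eq: "i \<in> children T k \<Longrightarrow> i \<in> {1..n} \<Longrightarrow> psi n T i = k"
  using psi_children children_unique by blast

lemma psi_par: "psi n T \<in> par 0 {1..n}"
proof -
  have vals: "psi n T i \<in> insert 0 {1..n}" if "i \<in> {1..n}" for i
    using children_sub[OF psi_children[OF that]] by auto
  have "(i, 0) \<in> (prel (psi n T) {1..n})\<^sup>*" if "i \<in> {0..n}" for i
    using that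
  proof (induction "tdist T i" arbitrary: i rule: less_induct)
    case less
    show ?case
    proof (cases "i = 0")
      case False
      then have i: "i \<in> {1..n}" using less.prems by auto
      obtain k where k: "i \<in> children T k" "tdist T k < tdist T i" using parent_exists[OF i] by auto
      have pk: "psi n T i = k" using psi_eq[OF k(1) i] .
      have "k \<in> {0..n}" using children_sub[OF k(1)] by auto
      then have "(k, 0) \<in> (prel (psi n T) {1..n})\<^sup>*" using less.hyps k(2) by blast
      moreover have "(i, k) \<in> prel (psi n T) {1..n}" using i pk by (auto simp: prel_mem)
      ultimately show ?thesis by (meson converse_rtrancl_into_rtrancl)
    qed simp
  qed
  then show ?thesis using vals by (auto simp: par_def psi_def)
qed

lemma edges_psi: "edges (psi n T) {1..n} = T"
proof
  show "edges (psi n T) {1..n} \<subseteq> T"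
  proof
    fix e assume "e \<in> edges (psi n T) {1..n}"
    then obtain i where i: "i \<in> {1..n}" "e = {i, psi n T i}" by (auto simp: edges_def)
    have "{psi n T i, i} \<in> T" using children_sub[OF psi_children[OF i(1)]] by blast
    then show "e \<in> T" using i by (simp add: insert_commute)
  qed
  show "T \<subseteq> edges (psi n T) {1..n}"
  proof
    fix e assume e: "e \<in> T"
    then obtain a b where ab: "e = {a, b}" "a \<noteq> b"
      using T_edge[OF e] by (auto simp: card_2_iff)
    have abn: "a \<in> {0..n}" "b \<in> {0..n}" using T_edge[OF e] ab by auto
    have br: "\<not> reach (T - {e}) a b" using T_bridge[of a b] e ab by simp
    have "reach (T - {e}) 0 a \<or> reach (T - {e}) 0 b"
      using reach_remove[OF T_conn[OF abn(1)], of e] ab by auto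
    then show "e \<in> edges (psi n T) {1..n}"
    proof
      assume r: "reach (T - {e}) 0 a"
      have "b \<noteq> 0"
      proof
        assume "b = 0"
        then have "reach (T - {e}) b a" using r by simp
        then show False using br reach_sym by metis
      qed
      then have b1: "b \<in> {1..n}" using abn by auto
      have "b \<in> children T a" using e ab r by (auto simp: children_def)
      then have "psi n T b = a" using psi_eq b1 by auto
      then show ?thesis using b1 ab by (auto simp: edges_def insert_commute)
    next
      assume r: "reach (T - {e}) 0 b"
      have "a \<noteq> 0"
      proof
        assume "a = 0"
        then have "reach (T - {e}) a b" using r by simp
        then show False using br by simp
      qed
      then have a1: "a \<in> {1..n}" using abn by auto
      have "a \<in> children T b" using e ab r by (auto simp: children_def insert_commute)
      then have "psi n T a = b" using psi_eq a1 by auto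
      then show ?thesis using a1 ab by (auto simp: edges_def)
    qed
  qed
qed

end

lemma bij_edges: "bij_betw (\<lambda>p. edges p {1..n}) (par 0 {1..n}) (trees n)"
proof (rule bij_betw_imageI)
  show "inj_on (\<lambda>p. edges p {1..n}) (par 0 {1..n})"
  proof (rule inj_onI)
    fix p q assume p: "p \<in> par 0 {1..n}" and q: "q \<in> par 0 {1..n}" and e: "edges p {1..n} = edges q {1..n}"
    have f: "fib p {1..n} k = fib q {1..n} k" for k
      using children_edges[OF p, of k] children_edges[OF q, of k] e by simp
    show "p = q"
    proof
      fix i show "p i = q i"
      proof (cases "i \<in> {1..n}")
        case True
        then have "i \<in> fib q {1..n} (p i)" using f[of "p i"] by (auto simp: fib_def)
        then show ?thesis by (auto simp: fib_def)
      qed (simp add: par_memD(2)[OF p] par_memD(2)[OF q])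
    qed
  qed
  show "(\<lambda>p. edges p {1..n}) ` par 0 {1..n} = trees n"
    using edges_tree psi_par edges_psi by blast
qed

lemma tree_weight_blockw:
  "tree_weight v n T x = (\<Prod>k\<in>{0..n}. blockw (\<lambda>a b. ennreal \<bar>mayer v a b\<bar>) (\<lambda>a b. ennreal (1 + mayer v a b)) (x k) (children T k) x)"
  by (simp add: tree_weight_def blockw_def pairs_def)

lemma sum_trees_par:
  "(\<Sum>T\<in>trees n. tree_weight v n T x) =
   (\<Sum>p\<in>par 0 {1..n}. wt (\<lambda>a b. ennreal \<bar>mayer v a b\<bar>) (\<lambda>a b. ennreal (1 + mayer v a b)) 0 {1..n} p x)"
proof -
  have iv: "{0..n} = insert 0 {1..n}" by auto
  have "(\<Sum>T\<in>trees n. tree_weight v n T x) = (\<Sum>p\<in>par 0 {1..n}. tree_weight v n (edges p {1..n}) x)"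
    using sum.reindex_bij_betw[OF bij_edges, of "\<lambda>T. tree_weight v n T x"] by simp
  also have "\<dots> = (\<Sum>p\<in>par 0 {1..n}. wt (\<lambda>a b. ennreal \<bar>mayer v a b\<bar>) (\<lambda>a b. ennreal (1 + mayer v a b)) 0 {1..n} p x)"
  proof (rule sum.cong[OF refl])
    fix p assume p: "p \<in> par 0 {1..n}"
    show "tree_weight v n (edges p {1..n}) x = wt (\<lambda>a b. ennreal \<bar>mayer v a b\<bar>) (\<lambda>a b. ennreal (1 + mayer v a b)) 0 {1..n} p x"
      unfolding tree_weight_blockw wt_def children_edges[OF p] iv ..
  qed
  finally show ?thesis .
qed


lemma suminf_swap_ennreal: "(\<Sum>i. \<Sum>j. f i j) = (\<Sum>j. \<Sum>i. (f i j :: ennreal))"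
proof -
  interpret P: pair_sigma_finite "count_space (UNIV::nat set)" "count_space (UNIV::nat set)"
    by (intro pair_sigma_finite.intro sigma_finite_measure_count_space)
  have m: "case_prod f \<in> borel_measurable (count_space UNIV \<Otimes>\<^sub>M count_space UNIV)"
    by (simp add: pair_measure_countable)
  have "(\<Sum>i. \<Sum>j. f i j) = (\<integral>\<^sup>+i. (\<integral>\<^sup>+j. f i j \<partial>count_space UNIV) \<partial>count_space UNIV)"
    by (simp add: nn_integral_count_space_nat)
  also have "\<dots> = (\<integral>\<^sup>+j. (\<integral>\<^sup>+i. f i j \<partial>count_space UNIV) \<partial>count_space UNIV)"
    by (rule P.Fubini'[OF m, symmetric])
  also have "\<dots> = (\<Sum>j. \<Sum>i. f i j)"
    by (simp add: nn_integral_count_space_nat)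
  finally show ?thesis .
qed

lemma suminf_shift_ennreal: "(\<Sum>m. if b \<le> m then f (m - b) else 0) = (\<Sum>d. (f d :: ennreal))"
proof -
  have "(\<Sum>m. if b \<le> m then f (m - b) else 0) = (\<Sum>m. (if b \<le> m + b then f (m + b - b) else 0)) + (\<Sum>i<b. if b \<le> i then f (i - b) else (0::ennreal))"
    by (rule suminf_offset) simp
  then show ?thesis by simp
qed

lemma cauchy_ennreal:
  "(\<Sum>b. a b) * (\<Sum>d. c d) = (\<Sum>m. \<Sum>b\<le>m. a b * (c (m - b) :: ennreal))"
proof -
  have "(\<Sum>b. a b) * (\<Sum>d. c d) = (\<Sum>b. \<Sum>d. a b * c d)"
    by simp
  also have "\<dots> = (\<Sum>b. \<Sum>m. if b \<le> m then a b * c (m - b) else 0)"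
    using suminf_shift_ennreal[of _ "\<lambda>d. a _ * c d"] by simp
  also have "\<dots> = (\<Sum>m. \<Sum>b. if b \<le> m then a b * c (m - b) else 0)"
    by (rule suminf_swap_ennreal)
  also have "\<dots> = (\<Sum>m. \<Sum>b\<le>m. a b * c (m - b))"
  proof (rule suminf_cong)
    fix m
    have "(\<Sum>b. if b \<le> m then a b * c (m - b) else 0) = (\<Sum>b<Suc m. if b \<le> m then a b * c (m - b) else 0)"
      by (rule suminf_finite) auto
    also have "\<dots> = (\<Sum>b\<le>m. a b * c (m - b))"
      by (simp add: lessThan_Suc_atMost)
    finally show "(\<Sum>b. if b \<le> m then a b * c (m - b) else 0) = (\<Sum>b\<le>m. a b * c (m - b))" .
  qed
  finally show ?thesis .
qed

definition AA :: "(nat \<Rightarrow> nat \<Rightarrow> ennreal) \<Rightarrow> nat set \<Rightarrow> nat set \<Rightarrow> ennreal" where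
  "AA g K S = (\<Sum>\<pi>\<in>S \<rightarrow>\<^sub>E K. \<Prod>j\<in>K. g j (card (blk S \<pi> j)))"

lemma bij_PiE_reindex:
  assumes bij: "bij_betw \<sigma> S' S"
  shows "bij_betw (\<lambda>\<pi>. \<lambda>i\<in>S'. \<pi> (\<sigma> i)) (S \<rightarrow>\<^sub>E K) (S' \<rightarrow>\<^sub>E K)"
proof -
  define \<tau> where "\<tau> = the_inv_into S' \<sigma>"
  have t1: "\<tau> i \<in> S'" "\<sigma> (\<tau> i) = i" if "i \<in> S" for i
    using that bij unfolding \<tau>_def bij_betw_def
    by (auto intro: the_inv_into_into f_the_inv_into_f)
  have t2: "\<tau> (\<sigma> i) = i" "\<sigma> i \<in> S" if "i \<in> S'" for i
    using that bij unfolding \<tau>_def bij_betw_def by (auto intro: the_inv_into_f_f)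
  show ?thesis
  proof (rule bij_betwI[where g = "\<lambda>\<pi>. \<lambda>i\<in>S. \<pi> (\<tau> i)"])
    show "(\<lambda>\<pi>. \<lambda>i\<in>S'. \<pi> (\<sigma> i)) \<in> (S \<rightarrow>\<^sub>E K) \<rightarrow> (S' \<rightarrow>\<^sub>E K)" using t2 by auto
    show "(\<lambda>\<pi>. \<lambda>i\<in>S. \<pi> (\<tau> i)) \<in> (S' \<rightarrow>\<^sub>E K) \<rightarrow> (S \<rightarrow>\<^sub>E K)" using t1 by auto
    show "(\<lambda>i\<in>S. (\<lambda>i\<in>S'. \<pi> (\<sigma> i)) (\<tau> i)) = \<pi>" if "\<pi> \<in> S \<rightarrow>\<^sub>E K" for \<pi>
    proof
      fix i show "(\<lambda>i\<in>S. (\<lambda>i\<in>S'. \<pi> (\<sigma> i)) (\<tau> i)) i = \<pi> i"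
        using that t1 by (cases "i \<in> S") (auto simp: PiE_def extensional_def)
    qed
    show "(\<lambda>i\<in>S'. (\<lambda>i\<in>S. \<pi> (\<tau> i)) (\<sigma> i)) = \<pi>" if "\<pi> \<in> S' \<rightarrow>\<^sub>E K" for \<pi>
    proof
      fix i show "(\<lambda>i\<in>S'. (\<lambda>i\<in>S. \<pi> (\<tau> i)) (\<sigma> i)) i = \<pi> i"
        using that t2 by (cases "i \<in> S'") (auto simp: PiE_def extensional_def)
    qed
  qed
qed

lemma card_blk_reindex:
  assumes bij: "bij_betw \<sigma> S' S"
  shows "card (blk S' (\<lambda>i\<in>S'. \<pi> (\<sigma> i)) j) = card (blk S \<pi> j)"
proof -
  have inj: "inj_on \<sigma> (blk S' (\<lambda>i\<in>S'. \<pi> (\<sigma> i)) j)"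
    using bij unfolding bij_betw_def by (rule inj_on_subset[OF conjunct1]) (auto simp: blk_def)
  have "\<sigma> ` blk S' (\<lambda>i\<in>S'. \<pi> (\<sigma> i)) j = blk S \<pi> j"
    using bij unfolding bij_betw_def blk_def by auto
  then show ?thesis using card_image[OF inj] by simp
qed

lemma AA_relabel:
  assumes bij: "bij_betw \<sigma> S' S"
  shows "AA g K S = AA g K S'"
proof -
  have "AA g K S' = (\<Sum>\<pi>\<in>S \<rightarrow>\<^sub>E K. \<Prod>j\<in>K. g j (card (blk S' (\<lambda>i\<in>S'. \<pi> (\<sigma> i)) j)))"
    unfolding AA_def using sum.reindex_bij_betw[OF bij_PiE_reindex[OF bij, of K],
       of "\<lambda>\<pi>. \<Prod>j\<in>K. g j (card (blk S' \<pi> j))"] by simp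
  also have "\<dots> = AA g K S"
    unfolding AA_def card_blk_reindex[OF bij] ..
  finally show ?thesis ..
qed


lemma AA_insert:
  assumes j0: "j0 \<notin> K" and finS: "finite S" and finK: "finite K"
  shows "AA g (insert j0 K) S = (\<Sum>B\<in>Pow S. g j0 (card B) * AA g K (S - B))"
proof -
  define \<Phi> where "\<Phi> = (\<lambda>(B, \<pi>'). \<lambda>i\<in>S. if i \<in> B then j0 else \<pi>' i)"
  define \<Psi> where "\<Psi> = (\<lambda>\<pi>. (blk S \<pi> j0, restrict \<pi> (S - blk S \<pi> j0)))"
  have bij: "bij_betw \<Phi> (SIGMA B:Pow S. (S - B) \<rightarrow>\<^sub>E K) (S \<rightarrow>\<^sub>E insert j0 K)"
  proof (rule bij_betwI[where g = \<Psi>])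
    show "\<Phi> \<in> (SIGMA B:Pow S. (S - B) \<rightarrow>\<^sub>E K) \<rightarrow> (S \<rightarrow>\<^sub>E insert j0 K)"
      by (auto simp: \<Phi>_def PiE_iff)
    show "\<Psi> \<in> (S \<rightarrow>\<^sub>E insert j0 K) \<rightarrow> (SIGMA B:Pow S. (S - B) \<rightarrow>\<^sub>E K)"
    proof
      fix \<pi> assume \<pi>: "\<pi> \<in> S \<rightarrow>\<^sub>E insert j0 K"
      have "\<forall>i\<in>S - blk S \<pi> j0. \<pi> i \<in> K" using \<pi> by (auto simp: blk_def PiE_iff)
      then have "restrict \<pi> (S - blk S \<pi> j0) \<in> (S - blk S \<pi> j0) \<rightarrow>\<^sub>E K"
        by (simp add: restrict_PiE_iff)
      moreover have "blk S \<pi> j0 \<in> Pow S" by (auto simp: blk_def)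
      ultimately show "\<Psi> \<pi> \<in> (SIGMA B:Pow S. (S - B) \<rightarrow>\<^sub>E K)" by (simp add: \<Psi>_def)
    qed
    show "\<Psi> (\<Phi> x) = x" if x: "x \<in> (SIGMA B:Pow S. (S - B) \<rightarrow>\<^sub>E K)" for x
    proof -
      obtain B \<pi>' where x': "x = (B, \<pi>')" "B \<subseteq> S" "\<pi>' \<in> (S - B) \<rightarrow>\<^sub>E K" using x by auto
      have "\<pi>' i \<noteq> j0" if "i \<in> S - B" for i using x'(3) that j0 by auto
      then have bB: "blk S (\<Phi> x) j0 = B" using x' by (auto simp: blk_def \<Phi>_def)
      have "restrict (\<Phi> x) (S - B) = \<pi>'"
      proof
        fix i show "restrict (\<Phi> x) (S - B) i = \<pi>' i"
          using x' by (cases "i \<in> S - B") (auto simp: \<Phi>_def PiE_def extensional_def)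
      qed
      then show ?thesis using bB x' by (simp add: \<Psi>_def)
    qed
    show "\<Phi> (\<Psi> y) = y" if y: "y \<in> S \<rightarrow>\<^sub>E insert j0 K" for y
    proof
      fix i show "\<Phi> (\<Psi> y) i = y i"
        using y by (cases "i \<in> S") (auto simp: \<Phi>_def \<Psi>_def blk_def PiE_def extensional_def)
    qed
  qed
  have finP: "finite (Pow S)" using finS by simp
  have fin2: "finite ((S - B) \<rightarrow>\<^sub>E K)" for B using finS finK by (intro finite_PiE) auto
  have "AA g (insert j0 K) S = (\<Sum>x\<in>(SIGMA B:Pow S. (S - B) \<rightarrow>\<^sub>E K). \<Prod>j\<in>insert j0 K. g j (card (blk S (\<Phi> x) j)))"
    unfolding AA_def using sum.reindex_bij_betw[OF bij, of "\<lambda>\<pi>. \<Prod>j\<in>insert j0 K. g j (card (blk S \<pi> j))"] by simp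
  also have "\<dots> = (\<Sum>x\<in>(SIGMA B:Pow S. (S - B) \<rightarrow>\<^sub>E K). g j0 (card (fst x)) * (\<Prod>j\<in>K. g j (card (blk (S - fst x) (snd x) j))))"
  proof (rule sum.cong[OF refl])
    fix x assume x: "x \<in> (SIGMA B:Pow S. (S - B) \<rightarrow>\<^sub>E K)"
    obtain B \<pi>' where x': "x = (B, \<pi>')" "B \<subseteq> S" "\<pi>' \<in> (S - B) \<rightarrow>\<^sub>E K" using x by auto
    have ne: "\<pi>' i \<noteq> j0" if "i \<in> S - B" for i using x'(3) that j0 by auto
    have b0: "blk S (\<Phi> x) j0 = B" using x' ne by (auto simp: blk_def \<Phi>_def)
    have bj: "blk S (\<Phi> x) j = blk (S - B) \<pi>' j" if "j \<in> K" for j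
      using x' that j0 by (auto simp: blk_def \<Phi>_def)
    show "(\<Prod>j\<in>insert j0 K. g j (card (blk S (\<Phi> x) j))) = g j0 (card (fst x)) * (\<Prod>j\<in>K. g j (card (blk (S - fst x) (snd x) j)))"
      using j0 finK b0 bj x' by (simp add: prod.insert)
  qed
  also have "\<dots> = (\<Sum>B\<in>Pow S. \<Sum>\<pi>'\<in>(S - B) \<rightarrow>\<^sub>E K. g j0 (card B) * (\<Prod>j\<in>K. g j (card (blk (S - B) \<pi>' j))))"
    using sum.Sigma[OF finP, of "\<lambda>B. (S - B) \<rightarrow>\<^sub>E K" "\<lambda>B \<pi>'. g j0 (card B) * (\<Prod>j\<in>K. g j (card (blk (S - B) \<pi>' j)))"] fin2
    by (simp add: case_prod_beta)
  also have "\<dots> = (\<Sum>B\<in>Pow S. g j0 (card B) * AA g K (S - B))"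
    by (simp add: AA_def sum_distrib_left)
  finally show ?thesis .
qed

lemma sum_Pow_card:
  assumes "finite S"
  shows "(\<Sum>B\<in>Pow S. F (card B)) = (\<Sum>b\<le>card S. of_nat (card S choose b) * (F b :: ennreal))"
proof -
  have "(\<Sum>B\<in>Pow S. F (card B)) = (\<Sum>b\<le>card S. \<Sum>B\<in>{B\<in>Pow S. card B = b}. F (card B))"
    by (rule sum.group[symmetric]) (use assms in \<open>auto intro: card_mono\<close>)
  also have "\<dots> = (\<Sum>b\<le>card S. of_nat (card S choose b) * F b)"
  proof (rule sum.cong[OF refl])
    fix b
    have "card {B\<in>Pow S. card B = b} = card S choose b"
      using n_subsets[OF assms, of b] by (simp add: Pow_def)
    then show "(\<Sum>B\<in>{B\<in>Pow S. card B = b}. F (card B)) = of_nat (card S choose b) * F b"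
      by simp
  qed
  finally show ?thesis .
qed

definition aa :: "(nat \<Rightarrow> nat \<Rightarrow> ennreal) \<Rightarrow> nat set \<Rightarrow> nat \<Rightarrow> ennreal" where
  "aa g K m = AA g K {..<m}"

lemma AA_card: "finite S \<Longrightarrow> AA g K S = aa g K (card S)"
proof -
  assume "finite S"
  then obtain h where "bij_betw h {0..<card S} S" using ex_bij_betw_nat_finite by blast
  then show ?thesis unfolding aa_def using AA_relabel[of h "{..<card S}" S g K] by (simp add: atLeast0LessThan)
qed

lemma aa_insert:
  assumes j0: "j0 \<notin> K" and finK: "finite K"
  shows "aa g (insert j0 K) m = (\<Sum>b\<le>m. of_nat (m choose b) * (g j0 b * aa g K (m - b)))"
proof -
  have "aa g (insert j0 K) m = (\<Sum>B\<in>Pow {..<m}. g j0 (card B) * aa g K (m - card B))"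
    unfolding aa_def
    by (subst AA_insert[OF j0 _ finK]) (auto intro!: sum.cong simp: AA_card[folded aa_def] card_Diff_subset finite_subset)
  also have "\<dots> = (\<Sum>b\<le>m. of_nat (m choose b) * (g j0 b * aa g K (m - b)))"
    using sum_Pow_card[of "{..<m}" "\<lambda>b. g j0 b * aa g K (m - b)"] by simp
  finally show ?thesis .
qed

lemma binom_ennreal:
  assumes "b \<le> m"
  shows "ennreal (1 / fact m) * of_nat (m choose b) = ennreal (1 / fact b) * ennreal (1 / fact (m - b))"
proof -
  have "real (m choose b) = fact m / (fact b * fact (m - b))" using binomial_fact[OF assms] by simp
  then have "1 / fact m * real (m choose b) = 1 / fact b * (1 / fact (m - b))" by (simp add: field_simps)
  then have "ennreal (1 / fact m * real (m choose b)) = ennreal (1 / fact b * (1 / fact (m - b)))" by simp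
  moreover have "ennreal (1 / fact m * real (m choose b)) = ennreal (1 / fact m) * ennreal (real (m choose b))"
    by (rule ennreal_mult) auto
  moreover have "ennreal (1 / fact b * (1 / fact (m - b))) = ennreal (1 / fact b) * ennreal (1 / fact (m - b))"
    by (rule ennreal_mult) auto
  ultimately show ?thesis by (simp add: ennreal_of_nat_eq_real_of_nat)
qed

lemma aa_empty: "aa g {} m = (if m = 0 then 1 else 0)"
  by (auto simp: aa_def AA_def PiE_empty_range)

lemma egf_aa:
  assumes "finite K"
  shows "(\<Sum>m. ennreal (1 / fact m) * aa g K m) = (\<Prod>j\<in>K. \<Sum>m. ennreal (1 / fact m) * g j m)"
  using assms
proof (induction K rule: finite_induct)
  case empty
  have "(\<Sum>m. ennreal (1 / fact m) * aa g {} m) = (\<Sum>m<1. ennreal (1 / fact m) * aa g {} m)"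
    by (rule suminf_finite) (auto simp: aa_empty)
  then show ?case by (simp add: aa_empty)
next
  case (insert j0 K)
  have "(\<Sum>m. ennreal (1 / fact m) * aa g (insert j0 K) m) =
     (\<Sum>m. \<Sum>b\<le>m. (ennreal (1 / fact b) * g j0 b) * (ennreal (1 / fact (m - b)) * aa g K (m - b)))"
  proof (rule suminf_cong)
    fix m
    have "ennreal (1 / fact m) * aa g (insert j0 K) m = (\<Sum>b\<le>m. ennreal (1 / fact m) * of_nat (m choose b) * (g j0 b * aa g K (m - b)))"
      by (simp add: aa_insert[OF insert(2,1)] sum_distrib_left mult.assoc)
    also have "\<dots> = (\<Sum>b\<le>m. (ennreal (1 / fact b) * g j0 b) * (ennreal (1 / fact (m - b)) * aa g K (m - b)))"
    proof (rule sum.cong[OF refl])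
      fix b assume b: "b \<in> {..m}"
      have e: "ennreal (1 / fact m) * of_nat (m choose b) = ennreal (1 / fact b) * ennreal (1 / fact (m - b))"
        using binom_ennreal b by simp
      show "ennreal (1 / fact m) * of_nat (m choose b) * (g j0 b * aa g K (m - b)) =
          (ennreal (1 / fact b) * g j0 b) * (ennreal (1 / fact (m - b)) * aa g K (m - b))"
        unfolding e by (simp add: ac_simps)
    qed
    finally show "ennreal (1 / fact m) * aa g (insert j0 K) m = (\<Sum>b\<le>m. (ennreal (1 / fact b) * g j0 b) * (ennreal (1 / fact (m - b)) * aa g K (m - b)))" .
  qed
  also have "\<dots> = (\<Sum>b. ennreal (1 / fact b) * g j0 b) * (\<Sum>d. ennreal (1 / fact d) * aa g K d)"
    by (rule cauchy_ennreal[symmetric])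
  also have "\<dots> = (\<Prod>j\<in>insert j0 K. \<Sum>m. ennreal (1 / fact m) * g j m)"
    using insert by simp
  finally show ?case .
qed


lemma bij_PiE_post:
  assumes bij: "bij_betw h K C"
  shows "bij_betw (\<lambda>\<pi>'. \<lambda>i\<in>S. h (\<pi>' i)) (S \<rightarrow>\<^sub>E K) (S \<rightarrow>\<^sub>E C)"
proof -
  define \<tau> where "\<tau> = the_inv_into K h"
  have t1: "\<tau> i \<in> K" "h (\<tau> i) = i" if "i \<in> C" for i
    using that bij unfolding \<tau>_def bij_betw_def
    by (auto intro: the_inv_into_into f_the_inv_into_f)
  have t2: "\<tau> (h i) = i" "h i \<in> C" if "i \<in> K" for i
    using that bij unfolding \<tau>_def bij_betw_def by (auto intro: the_inv_into_f_f)
  show ?thesis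
  proof (rule bij_betwI[where g = "\<lambda>\<pi>. \<lambda>i\<in>S. \<tau> (\<pi> i)"])
    show "(\<lambda>\<pi>'. \<lambda>i\<in>S. h (\<pi>' i)) \<in> (S \<rightarrow>\<^sub>E K) \<rightarrow> (S \<rightarrow>\<^sub>E C)" using t2 by (auto simp: PiE_iff)
    show "(\<lambda>\<pi>. \<lambda>i\<in>S. \<tau> (\<pi> i)) \<in> (S \<rightarrow>\<^sub>E C) \<rightarrow> (S \<rightarrow>\<^sub>E K)" using t1 by (auto simp: PiE_iff)
    show "(\<lambda>i\<in>S. \<tau> ((\<lambda>i\<in>S. h (\<pi> i)) i)) = \<pi>" if "\<pi> \<in> S \<rightarrow>\<^sub>E K" for \<pi>
    proof
      fix i show "(\<lambda>i\<in>S. \<tau> ((\<lambda>i\<in>S. h (\<pi> i)) i)) i = \<pi> i"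
        using that t2 by (cases "i \<in> S") (auto simp: PiE_def extensional_def)
    qed
    show "(\<lambda>i\<in>S. h ((\<lambda>i\<in>S. \<tau> (\<pi> i)) i)) = \<pi>" if "\<pi> \<in> S \<rightarrow>\<^sub>E C" for \<pi>
    proof
      fix i show "(\<lambda>i\<in>S. h ((\<lambda>i\<in>S. \<tau> (\<pi> i)) i)) i = \<pi> i"
        using that t1 by (cases "i \<in> S") (auto simp: PiE_def extensional_def)
    qed
  qed
qed

definition bijs :: "nat \<Rightarrow> nat set \<Rightarrow> (nat \<Rightarrow> nat) set" where
  "bijs k C = {h \<in> {1..k} \<rightarrow>\<^sub>E C. inj_on h {1..k}}"

lemma bijs_bij: "h \<in> bijs k C \<Longrightarrow> finite C \<Longrightarrow> card C = k \<Longrightarrow> bij_betw h {1..k} C"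
proof -
  assume h: "h \<in> bijs k C" and finC: "finite C" and cC: "card C = k"
  have inj: "inj_on h {1..k}" and sub: "h ` {1..k} \<subseteq> C" using h by (auto simp: bijs_def)
  have "card (h ` {1..k}) = card C" using card_image[OF inj] cC by simp
  then have "h ` {1..k} = C" using card_subset_eq[OF finC sub] by simp
  then show ?thesis using inj by (simp add: bij_betw_def)
qed

lemma card_bijs: "finite C \<Longrightarrow> card C = k \<Longrightarrow> card (bijs k C) = fact k"
  unfolding bijs_def
  using card_inj_on_subset_funcset[of "{1..k}" C "{1..k}"] fact_prod_rev[of k, where 'a=nat]
  by simp

lemma inner_sum_relabel:
  assumes bij: "bij_betw h {1..k} C" and S: "finite S"
  shows "(\<Sum>\<pi>\<in>S \<rightarrow>\<^sub>E C. \<Prod>j\<in>{1..k}. g j (card (blk S \<pi> (h j)))) = AA g {1..k} S"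
proof -
  have inj: "inj_on h {1..k}" using bij by (auto simp: bij_betw_def)
  have "(\<Sum>\<pi>\<in>S \<rightarrow>\<^sub>E C. \<Prod>j\<in>{1..k}. g j (card (blk S \<pi> (h j)))) =
      (\<Sum>\<pi>'\<in>S \<rightarrow>\<^sub>E {1..k}. \<Prod>j\<in>{1..k}. g j (card (blk S (\<lambda>i\<in>S. h (\<pi>' i)) (h j))))"
    using sum.reindex_bij_betw[OF bij_PiE_post[OF bij, of S], of "\<lambda>\<pi>. \<Prod>j\<in>{1..k}. g j (card (blk S \<pi> (h j)))"]
    by simp
  also have "\<dots> = AA g {1..k} S"
    unfolding AA_def
  proof (intro sum.cong refl prod.cong arg_cong[where f="g _"] arg_cong[where f=card])
    fix \<pi>' j assume \<pi>': "\<pi>' \<in> S \<rightarrow>\<^sub>E {1..k}" and j: "j \<in> {1..k}"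
    show "blk S (\<lambda>i\<in>S. h (\<pi>' i)) (h j) = blk S \<pi>' j"
    proof (rule set_eqI)
      fix i show "i \<in> blk S (\<lambda>i\<in>S. h (\<pi>' i)) (h j) \<longleftrightarrow> i \<in> blk S \<pi>' j"
      proof (cases "i \<in> S")
        case True
        then have pi: "\<pi>' i \<in> {1..k}" using \<pi>' by auto
        show ?thesis using True inj_on_eq_iff[OF inj pi j] by (simp add: blk_def)
      qed (simp add: blk_def)
    qed
  qed
  finally show ?thesis .
qed

definition SS :: "(nat \<Rightarrow> nat \<Rightarrow> ennreal) \<Rightarrow> nat \<Rightarrow> nat \<Rightarrow> ennreal" where
  "SS g n k = (\<Sum>C\<in>{C. C \<subseteq> {1..n} \<and> card C = k}. \<Sum>h\<in>bijs k C.
      \<Sum>\<pi>\<in>({1..n} - C) \<rightarrow>\<^sub>E C. \<Prod>j\<in>{1..k}. g j (card (blk ({1..n} - C) \<pi> (h j))))"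

lemma SS_eq: "SS g n k = of_nat (n choose k) * (of_nat (fact k) * aa g {1..k} (n - k))"
proof -
  have "SS g n k = (\<Sum>C\<in>{C. C \<subseteq> {1..n} \<and> card C = k}. of_nat (fact k) * aa g {1..k} (n - k))"
    unfolding SS_def
  proof (rule sum.cong[OF refl])
    fix C assume C: "C \<in> {C. C \<subseteq> {1..n} \<and> card C = k}"
    have finC: "finite C" using C finite_subset by blast
    have "(\<Sum>h\<in>bijs k C. \<Sum>\<pi>\<in>({1..n} - C) \<rightarrow>\<^sub>E C. \<Prod>j\<in>{1..k}. g j (card (blk ({1..n} - C) \<pi> (h j))))
        = (\<Sum>h\<in>bijs k C. aa g {1..k} (n - k))"
    proof (rule sum.cong[OF refl])
      fix h assume h: "h \<in> bijs k C"
      have "card ({1..n} - C) = n - k" using C by (auto simp: card_Diff_subset finC)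
      then show "(\<Sum>\<pi>\<in>({1..n} - C) \<rightarrow>\<^sub>E C. \<Prod>j\<in>{1..k}. g j (card (blk ({1..n} - C) \<pi> (h j)))) = aa g {1..k} (n - k)"
        using inner_sum_relabel[OF bijs_bij[OF h finC] , of "{1..n} - C" g] C AA_card[of "{1..n} - C" g "{1..k}"]
        by auto
    qed
    also have "\<dots> = of_nat (fact k) * aa g {1..k} (n - k)"
      using card_bijs[OF finC] C by simp
    finally show "(\<Sum>h\<in>bijs k C. \<Sum>\<pi>\<in>({1..n} - C) \<rightarrow>\<^sub>E C. \<Prod>j\<in>{1..k}. g j (card (blk ({1..n} - C) \<pi> (h j)))) =
        of_nat (fact k) * aa g {1..k} (n - k)" .
  qed
  also have "\<dots> = of_nat (n choose k) * (of_nat (fact k) * aa g {1..k} (n - k))"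
    using n_subsets[of "{1..n}" k] by simp
  finally show ?thesis .
qed

lemma egf_SS:
  "(\<Sum>n. ennreal (1 / fact n) * SS g n k) = (\<Prod>j\<in>{1..k}. \<Sum>m. ennreal (1 / fact m) * g j m)"
proof -
  have "(\<Sum>n. ennreal (1 / fact n) * SS g n k) =
     (\<Sum>n. if k \<le> n then ennreal (1 / fact (n - k)) * aa g {1..k} (n - k) else 0)"
  proof (rule suminf_cong)
    fix n
    show "ennreal (1 / fact n) * SS g n k = (if k \<le> n then ennreal (1 / fact (n - k)) * aa g {1..k} (n - k) else 0)"
    proof (cases "k \<le> n")
      case True
      have fk: "ennreal (1 / fact k) * of_nat (fact k) = 1"
      proof -
        have "ennreal (1 / fact k) * of_nat (fact k) = ennreal (1 / fact k * fact k)"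
          by (subst ennreal_mult) (auto simp: ennreal_of_nat_eq_real_of_nat)
        then show ?thesis by simp
      qed
      have "ennreal (1 / fact n) * SS g n k = (ennreal (1 / fact n) * of_nat (n choose k)) * (of_nat (fact k) * aa g {1..k} (n - k))"
        by (simp add: SS_eq mult.assoc)
      also have "\<dots> = (ennreal (1 / fact k) * of_nat (fact k)) * (ennreal (1 / fact (n - k)) * aa g {1..k} (n - k))"
        unfolding binom_ennreal[OF True] by (simp add: ac_simps)
      also have "\<dots> = ennreal (1 / fact (n - k)) * aa g {1..k} (n - k)"
        unfolding fk by simp
      finally show ?thesis using True by simp
    qed (simp add: SS_eq)
  qed
  also have "\<dots> = (\<Sum>d. ennreal (1 / fact d) * aa g {1..k} d)"
    by (rule suminf_shift_ennreal)
  also have "\<dots> = (\<Prod>j\<in>{1..k}. \<Sum>m. ennreal (1 / fact m) * g j m)"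
    by (simp add: egf_aa)
  finally show ?thesis .
qed


lemma SS_cong:
  assumes k: "k \<ge> 1" and g: "\<And>j m. m < n \<Longrightarrow> g j m = g' j m"
  shows "SS g n k = SS g' n k"
  unfolding SS_def
proof (intro sum.cong refl prod.cong)
  fix C \<pi> j assume C: "C \<in> {C. C \<subseteq> {1..n} \<and> card C = k}"
  have fin: "finite C" using C finite_subset by blast
  have "card (blk ({1..n} - C) \<pi> j') \<le> card ({1..n} - C)" for j'
    by (rule card_mono) (auto simp: blk_def)
  also have "card ({1..n} - C) = n - k" using C by (auto simp: card_Diff_subset fin)
  finally have le: "card (blk ({1..n} - C) \<pi> j') \<le> n - k" for j' .
  have "k \<le> n" using card_mono[of "{1..n}" C] C by auto
  then have "n - k < n" using k by arith
  then have "card (blk ({1..n} - C) \<pi> j') < n" for j' using le[of j'] by linarith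
  then show "g j (card (blk ({1..n} - C) \<pi> (h j))) = g' j (card (blk ({1..n} - C) \<pi> (h j)))" for h
    using g by blast
qed


definition Af :: "('a \<Rightarrow> 'a \<Rightarrow> ennreal) \<Rightarrow> 'a \<Rightarrow> 'a \<Rightarrow> ennreal" where
  "Af v a b = ennreal \<bar>mayer v a b\<bar>"
definition Bf :: "('a \<Rightarrow> 'a \<Rightarrow> ennreal) \<Rightarrow> 'a \<Rightarrow> 'a \<Rightarrow> ennreal" where
  "Bf v a b = ennreal (1 + mayer v a b)"

lemma expneg_measurable[measurable]: "expneg \<in> borel_measurable borel"
  unfolding expneg_def by measurable

locale setting =
  fixes lam :: "'a :: polish_space measure"
    and v :: "'a \<Rightarrow> 'a \<Rightarrow> ennreal"
    and z :: "'a \<Rightarrow> real"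
  assumes lam_borel: "sets lam = sets borel"
    and lam_fin: "\<And>B. bounded B \<Longrightarrow> B \<in> sets borel \<Longrightarrow> emeasure lam B < \<infinity>"
    and v_meas: "(\<lambda>p. v (fst p) (snd p)) \<in> borel_measurable (lam \<Otimes>\<^sub>M lam)"
    and v_sym: "\<And>x y. v x y = v y x"
    and z_meas: "z \<in> borel_measurable lam"
    and z_nonneg: "\<And>x. z x \<ge> 0"
begin

definition mu :: "'a measure" where "mu = density lam (\<lambda>y. ennreal (z y))"

lemma space_lam: "space lam = UNIV"
  using sets_eq_imp_space_eq[OF lam_borel] by simp

lemma sets_mu: "sets mu = sets borel"
  by (simp add: mu_def lam_borel)

lemma space_mu: "space mu = UNIV"
  using sets_eq_imp_space_eq[OF sets_mu] by simp

lemma meas_lam_iff: "measurable N lam = measurable N borel"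
  by (rule measurable_cong_sets) (auto simp: lam_borel)

lemma meas_mu_iff: "measurable N mu = measurable N borel"
  by (rule measurable_cong_sets) (auto simp: sets_mu)

lemma meas_from_mu: "measurable mu N = measurable borel N"
  by (rule measurable_cong_sets) (auto simp: sets_mu)

lemma meas_from_lam: "measurable lam N = measurable borel N"
  by (rule measurable_cong_sets) (auto simp: lam_borel)

lemma sf_lam: "sigma_finite_measure lam"
proof
  obtain x0 :: 'a where True by simp
  define A where "A = range (\<lambda>n::nat. cball x0 (real n))"
  have c: "countable A" unfolding A_def by simp
  have "cball x0 r \<in> sets lam" for r unfolding lam_borel by (simp add: borel_closed)
  then have s: "A \<subseteq> sets lam" unfolding A_def by blast
  have "x \<in> \<Union> A" for x
  proof -
    have "x \<in> cball x0 (real (nat \<lceil>dist x0 x\<rceil>))"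
      unfolding mem_cball by (rule real_nat_ceiling_ge)
    then show ?thesis unfolding A_def by blast
  qed
  then have u: "\<Union> A = space lam" unfolding space_lam by blast
  have "emeasure lam (cball x0 r) \<noteq> \<infinity>" for r
    using lam_fin[OF bounded_cball borel_closed[OF closed_cball]] by (simp add: less_top)
  then have f: "\<forall>a\<in>A. emeasure lam a \<noteq> \<infinity>" unfolding A_def by blast
  show "\<exists>A. countable A \<and> A \<subseteq> sets lam \<and> \<Union> A = space lam \<and> (\<forall>a\<in>A. emeasure lam a \<noteq> \<infinity>)"
    using c s u f by blast
qed

lemma sf_mu: "sigma_finite_measure mu"
proof -
  interpret sigma_finite_measure lam by (rule sf_lam)
  have "(\<lambda>y. ennreal (z y)) \<in> borel_measurable lam" using z_meas by measurable
  then show ?thesis unfolding mu_def by (subst sigma_finite_iff_density_finite') auto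
qed

lemma psf: "product_sigma_finite (\<lambda>_. mu)"
  unfolding product_sigma_finite_def using sf_mu by simp

lemma v_meas': 
  assumes "f \<in> measurable N borel" "g \<in> measurable N borel"
  shows "(\<lambda>\<omega>. v (f \<omega>) (g \<omega>)) \<in> borel_measurable N"
proof -
  have "(\<lambda>\<omega>. (f \<omega>, g \<omega>)) \<in> measurable N (lam \<Otimes>\<^sub>M lam)"
    using assms by (intro measurable_Pair) (auto simp: meas_lam_iff)
  from measurable_compose[OF this v_meas] show ?thesis by simp
qed

lemma mayer_meas:
  assumes "f \<in> measurable N borel" "g \<in> measurable N borel"
  shows "(\<lambda>\<omega>. mayer v (f \<omega>) (g \<omega>)) \<in> borel_measurable N"
  unfolding mayer_def using v_meas'[OF assms] by measurable

lemma Af_meas[measurable (raw)]: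
  assumes "f \<in> measurable N borel" "g \<in> measurable N borel"
  shows "(\<lambda>\<omega>. Af v (f \<omega>) (g \<omega>)) \<in> borel_measurable N"
  unfolding Af_def using mayer_meas[OF assms] by measurable

lemma Bf_meas[measurable (raw)]:
  assumes "f \<in> measurable N borel" "g \<in> measurable N borel"
  shows "(\<lambda>\<omega>. Bf v (f \<omega>) (g \<omega>)) \<in> borel_measurable N"
  unfolding Bf_def using mayer_meas[OF assms] by measurable

lemma Bf_sym: "Bf v a b = Bf v b a"
  by (simp add: Bf_def mayer_def v_sym)

lemma blockw_meas:
  assumes S: "finite S" and X: "\<And>k. k \<in> S \<Longrightarrow> (\<lambda>\<omega>. X \<omega> k) \<in> measurable N borel"
    and Y: "Y \<in> measurable N borel"
  shows "(\<lambda>\<omega>. blockw (Af v) (Bf v) (Y \<omega>) S (X \<omega>)) \<in> borel_measurable N"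
proof -
  have fp: "finite (pairs S)" using S by (auto intro: finite_subset[of _ "S \<times> S"] simp: pairs_def)
  have "(\<lambda>\<omega>. \<Prod>i\<in>S. Af v (Y \<omega>) (X \<omega> i)) \<in> borel_measurable N"
    by (rule borel_measurable_prod_ennreal) (auto intro!: Af_meas Y X)
  moreover have "(\<lambda>\<omega>. \<Prod>q\<in>pairs S. Bf v (X \<omega> (fst q)) (X \<omega> (snd q))) \<in> borel_measurable N"
    by (rule borel_measurable_prod_ennreal) (auto intro!: Bf_meas X simp: pairs_def)
  ultimately show ?thesis unfolding blockw_def by measurable
qed

lemma wt_meas:
  assumes V: "finite V" and X: "\<And>k. k \<in> insert r V \<Longrightarrow> (\<lambda>\<omega>. X \<omega> k) \<in> measurable N borel"
  shows "(\<lambda>\<omega>. wt (Af v) (Bf v) r V p (X \<omega>)) \<in> borel_measurable N"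
  unfolding wt_def
proof (rule borel_measurable_prod_ennreal)
  fix k assume k: "k \<in> insert r V"
  have "fib p V k \<subseteq> V" by (auto simp: fib_def)
  then show "(\<lambda>\<omega>. blockw (Af v) (Bf v) (X \<omega> k) (fib p V k) (X \<omega>)) \<in> borel_measurable N"
    using V X k by (intro blockw_meas) (auto intro: finite_subset)
qed


lemma space_PiM_mu: "space (PiM I (\<lambda>_. mu)) = PiE I (\<lambda>_. UNIV)"
  by (simp add: space_PiM space_mu)

lemma distr_reindex:
  assumes bij: "bij_betw g I J" and finI: "finite I"
  shows "distr (PiM J (\<lambda>_. mu)) (PiM I (\<lambda>_. mu)) (\<lambda>x. \<lambda>i\<in>I. x (g i)) = PiM I (\<lambda>_. mu)"
proof -
  interpret product_sigma_finite "\<lambda>_. mu" by (rule psf)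
  define \<tau> where "\<tau> = the_inv_into I g"
  have t1: "\<tau> j \<in> I" "g (\<tau> j) = j" if "j \<in> J" for j
    using that bij unfolding \<tau>_def bij_betw_def
    by (auto intro: the_inv_into_into f_the_inv_into_f)
  have t2: "\<tau> (g i) = i" "g i \<in> J" if "i \<in> I" for i
    using that bij unfolding \<tau>_def bij_betw_def by (auto intro: the_inv_into_f_f)
  have meas: "(\<lambda>x. \<lambda>i\<in>I. x (g i)) \<in> measurable (PiM J (\<lambda>_. mu)) (PiM I (\<lambda>_. mu))"
    by (rule measurable_restrict) (auto intro: measurable_component_singleton t2)
  show ?thesis
  proof (rule PiM_eqI[OF finI])
    show "sets (distr (PiM J (\<lambda>_. mu)) (PiM I (\<lambda>_. mu)) (\<lambda>x. \<lambda>i\<in>I. x (g i))) = sets (PiM I (\<lambda>_. mu))"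
      by simp
    fix A assume A: "\<And>i. i \<in> I \<Longrightarrow> A i \<in> sets mu"
    have pre: "(\<lambda>x. \<lambda>i\<in>I. x (g i)) -` PiE I A \<inter> space (PiM J (\<lambda>_. mu)) = PiE J (\<lambda>j. A (\<tau> j))"
    proof (rule set_eqI)
      fix x show "x \<in> (\<lambda>x. \<lambda>i\<in>I. x (g i)) -` PiE I A \<inter> space (PiM J (\<lambda>_. mu)) \<longleftrightarrow> x \<in> PiE J (\<lambda>j. A (\<tau> j))"
      proof
        assume x: "x \<in> (\<lambda>x. \<lambda>i\<in>I. x (g i)) -` PiE I A \<inter> space (PiM J (\<lambda>_. mu))"
        have "x j \<in> A (\<tau> j)" if j: "j \<in> J" for j
        proof -
          have "(\<lambda>i\<in>I. x (g i)) (\<tau> j) \<in> A (\<tau> j)" using x t1(1)[OF j] by (auto simp: PiE_iff)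
          then show ?thesis using t1[OF j] by simp
        qed
        then show "x \<in> PiE J (\<lambda>j. A (\<tau> j))" using x unfolding space_PiM_mu by (auto simp: PiE_iff)
      next
        assume x: "x \<in> PiE J (\<lambda>j. A (\<tau> j))"
        have "x (g i) \<in> A i" if i: "i \<in> I" for i
          using x t2[OF i] by (auto simp: PiE_iff)
        then show "x \<in> (\<lambda>x. \<lambda>i\<in>I. x (g i)) -` PiE I A \<inter> space (PiM J (\<lambda>_. mu))"
          using x unfolding space_PiM_mu by (auto simp: PiE_iff)
      qed
    qed
    have finJ: "finite J" using bij finI bij_betw_finite by blast
    have "emeasure (distr (PiM J (\<lambda>_. mu)) (PiM I (\<lambda>_. mu)) (\<lambda>x. \<lambda>i\<in>I. x (g i))) (PiE I A)
        = emeasure (PiM J (\<lambda>_. mu)) (PiE J (\<lambda>j. A (\<tau> j)))"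
      using A by (subst emeasure_distr[OF meas]) (auto simp: pre intro: sets_PiM_I_finite finI)
    also have "\<dots> = (\<Prod>j\<in>J. emeasure mu (A (\<tau> j)))"
      using A t1 by (subst emeasure_PiM[OF finJ]) auto
    also have "\<dots> = (\<Prod>i\<in>I. emeasure mu (A i))"
      using prod.reindex_bij_betw[OF bij, of "\<lambda>j. emeasure mu (A (\<tau> j))"] t2 by simp
    finally show "emeasure (distr (PiM J (\<lambda>_. mu)) (PiM I (\<lambda>_. mu)) (\<lambda>x. \<lambda>i\<in>I. x (g i))) (PiE I A) = (\<Prod>i\<in>I. emeasure mu (A i))" .
  qed
qed

lemma nn_integral_reindex:
  assumes bij: "bij_betw g I J" and finI: "finite I" and f: "f \<in> borel_measurable (PiM I (\<lambda>_. mu))"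
  shows "(\<integral>\<^sup>+x. f x \<partial>PiM I (\<lambda>_. mu)) = (\<integral>\<^sup>+x. f (\<lambda>i\<in>I. x (g i)) \<partial>PiM J (\<lambda>_. mu))"
proof -
  have t2: "g i \<in> J" if "i \<in> I" for i using that bij unfolding bij_betw_def by auto
  have meas: "(\<lambda>x. \<lambda>i\<in>I. x (g i)) \<in> measurable (PiM J (\<lambda>_. mu)) (PiM I (\<lambda>_. mu))"
    by (rule measurable_restrict) (auto intro: measurable_component_singleton t2)
  have "(\<integral>\<^sup>+x. f x \<partial>PiM I (\<lambda>_. mu)) = (\<integral>\<^sup>+x. f x \<partial>distr (PiM J (\<lambda>_. mu)) (PiM I (\<lambda>_. mu)) (\<lambda>x. \<lambda>i\<in>I. x (g i)))"
    by (simp only: distr_reindex[OF bij finI])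
  also have "\<dots> = (\<integral>\<^sup>+x. f (\<lambda>i\<in>I. x (g i)) \<partial>PiM J (\<lambda>_. mu))"
    by (rule nn_integral_distr[OF meas]) (simp only: distr_reindex[OF bij finI] f)
  finally show ?thesis .
qed


lemma restrict_merge_sub:
  "I \<inter> J = {} \<Longrightarrow> S \<subseteq> J \<Longrightarrow> restrict (merge I J (x, y)) S = restrict y S"
  "I \<inter> J = {} \<Longrightarrow> S \<subseteq> I \<Longrightarrow> restrict (merge I J (x, y)) S = restrict x S"
  by (auto simp: restrict_def merge_def fun_eq_iff)

lemma block_integral:
  assumes "finite K" and "\<And>k. k \<in> K \<Longrightarrow> finite (Bk k)" and "disjoint_family_on Bk K"
    and "\<And>k. k \<in> K \<Longrightarrow> F k \<in> borel_measurable (PiM (Bk k) (\<lambda>_. mu))"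
    and "\<And>k x. k \<in> K \<Longrightarrow> F k x = F k (restrict x (Bk k))"
  shows "(\<integral>\<^sup>+x. (\<Prod>k\<in>K. F k x) \<partial>PiM (\<Union>k\<in>K. Bk k) (\<lambda>_. mu)) = (\<Prod>k\<in>K. \<integral>\<^sup>+x. F k x \<partial>PiM (Bk k) (\<lambda>_. mu))"
  using assms
proof (induction K rule: finite_induct)
  case empty
  interpret product_sigma_finite "\<lambda>_. mu" by (rule psf)
  show ?case unfolding prod.empty image_empty Union_empty by (subst nn_integral_empty) auto
next
  case (insert k0 K)
  interpret product_sigma_finite "\<lambda>_. mu" by (rule psf)
  let ?R = "\<Union>k\<in>K. Bk k"
  have disj: "Bk k0 \<inter> ?R = {}" using insert.prems(2) insert.hyps(2)
    by (auto simp: disjoint_family_on_def)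
  have finR: "finite ?R" using insert.hyps(1) insert.prems(1) by auto
  have fin0: "finite (Bk k0)" using insert.prems(1) by auto
  have Fm: "(\<lambda>x. F k x) \<in> borel_measurable (PiM L (\<lambda>_. mu))" if "k \<in> insert k0 K" "Bk k \<subseteq> L" for k L
  proof -
    have "(\<lambda>x. F k (restrict x (Bk k))) \<in> borel_measurable (PiM L (\<lambda>_. mu))"
      using measurable_compose[OF measurable_restrict_subset[OF that(2)] insert.prems(3)[OF that(1)]] .
    moreover have "(\<lambda>x. F k (restrict x (Bk k))) = (\<lambda>x. F k x)"
      by (rule ext, rule insert.prems(4)[symmetric, OF that(1)])
    ultimately show ?thesis by simp
  qed
  have mR: "(\<lambda>y. \<Prod>k\<in>K. F k y) \<in> borel_measurable (PiM ?R (\<lambda>_. mu))"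
    by (rule borel_measurable_prod_ennreal) (rule Fm, auto)
  have mall: "(\<lambda>x. \<Prod>k\<in>insert k0 K. F k x) \<in> borel_measurable (PiM (Bk k0 \<union> ?R) (\<lambda>_. mu))"
    by (rule borel_measurable_prod_ennreal) (rule Fm, auto)
  have eq0: "F k0 (merge (Bk k0) ?R (x, y)) = F k0 x" for x y
  proof -
    have "F k0 (merge (Bk k0) ?R (x, y)) = F k0 (restrict (merge (Bk k0) ?R (x, y)) (Bk k0))"
      by (rule insert.prems(4)) simp
    also have "\<dots> = F k0 (restrict x (Bk k0))"
      by (simp only: restrict_merge_sub(2)[OF disj order_refl])
    also have "\<dots> = F k0 x" by (rule insert.prems(4)[symmetric]) simp
    finally show ?thesis .
  qed
  have eqk: "F k (merge (Bk k0) ?R (x, y)) = F k y" if "k \<in> K" for k x y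
  proof -
    have "Bk k \<subseteq> ?R" using that by auto
    have "F k (merge (Bk k0) ?R (x, y)) = F k (restrict (merge (Bk k0) ?R (x, y)) (Bk k))"
      by (rule insert.prems(4)) (simp add: that)
    also have "\<dots> = F k (restrict y (Bk k))"
      by (simp only: restrict_merge_sub(1)[OF disj \<open>Bk k \<subseteq> ?R\<close>])
    also have "\<dots> = F k y" by (rule insert.prems(4)[symmetric]) (simp add: that)
    finally show ?thesis .
  qed
  have "(\<integral>\<^sup>+x. (\<Prod>k\<in>insert k0 K. F k x) \<partial>PiM (\<Union>k\<in>insert k0 K. Bk k) (\<lambda>_. mu))
      = (\<integral>\<^sup>+x. (\<integral>\<^sup>+y. (\<Prod>k\<in>insert k0 K. F k (merge (Bk k0) ?R (x, y))) \<partial>PiM ?R (\<lambda>_. mu)) \<partial>PiM (Bk k0) (\<lambda>_. mu))"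
    using product_nn_integral_fold[OF disj fin0 finR mall] by simp
  also have "\<dots> = (\<integral>\<^sup>+x. F k0 x * (\<integral>\<^sup>+y. (\<Prod>k\<in>K. F k y) \<partial>PiM ?R (\<lambda>_. mu)) \<partial>PiM (Bk k0) (\<lambda>_. mu))"
  proof (rule nn_integral_cong)
    fix x
    have "(\<integral>\<^sup>+y. (\<Prod>k\<in>insert k0 K. F k (merge (Bk k0) ?R (x, y))) \<partial>PiM ?R (\<lambda>_. mu))
        = (\<integral>\<^sup>+y. F k0 x * (\<Prod>k\<in>K. F k y) \<partial>PiM ?R (\<lambda>_. mu))"
      using insert.hyps eq0 eqk by (intro nn_integral_cong) (simp add: prod.insert)
    also have "\<dots> = F k0 x * (\<integral>\<^sup>+y. (\<Prod>k\<in>K. F k y) \<partial>PiM ?R (\<lambda>_. mu))"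
      by (rule nn_integral_cmult[OF mR])
    finally show "(\<integral>\<^sup>+y. (\<Prod>k\<in>insert k0 K. F k (merge (Bk k0) ?R (x, y))) \<partial>PiM ?R (\<lambda>_. mu))
        = F k0 x * (\<integral>\<^sup>+y. (\<Prod>k\<in>K. F k y) \<partial>PiM ?R (\<lambda>_. mu))" .
  qed
  also have "\<dots> = (\<integral>\<^sup>+x. F k0 x \<partial>PiM (Bk k0) (\<lambda>_. mu)) * (\<integral>\<^sup>+y. (\<Prod>k\<in>K. F k y) \<partial>PiM ?R (\<lambda>_. mu))"
    by (rule nn_integral_multc[OF insert.prems(3)]) simp
  also have "(\<integral>\<^sup>+y. (\<Prod>k\<in>K. F k y) \<partial>PiM ?R (\<lambda>_. mu)) = (\<Prod>k\<in>K. \<integral>\<^sup>+x. F k x \<partial>PiM (Bk k) (\<lambda>_. mu))"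
  proof (rule insert.IH)
    show "disjoint_family_on Bk K" using insert.prems(2) by (auto simp: disjoint_family_on_def)
    show "\<And>k. k \<in> K \<Longrightarrow> finite (Bk k)" using insert.prems(1) by auto
    show "\<And>k. k \<in> K \<Longrightarrow> F k \<in> borel_measurable (PiM (Bk k) (\<lambda>_. mu))" using insert.prems(3) by auto
    show "\<And>k x. k \<in> K \<Longrightarrow> F k x = F k (restrict x (Bk k))" by (rule insert.prems(4)) auto
  qed
  finally show ?case using insert.hyps by (simp add: prod.insert)
qed


definition Wsum :: "nat \<Rightarrow> nat set \<Rightarrow> (nat \<Rightarrow> 'a) \<Rightarrow> ennreal" where
  "Wsum r V x = (\<Sum>p\<in>par r V. wt (Af v) (Bf v) r V p x)"

definition Iv :: "nat \<Rightarrow> nat set \<Rightarrow> 'a \<Rightarrow> ennreal" where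
  "Iv r V y = (\<integral>\<^sup>+x. Wsum r V (x(r := y)) \<partial>PiM V (\<lambda>_. mu))"

lemma Wsum_meas:
  assumes V: "finite V" and X: "\<And>k. k \<in> insert r V \<Longrightarrow> (\<lambda>\<omega>. X \<omega> k) \<in> measurable N borel"
  shows "(\<lambda>\<omega>. Wsum r V (X \<omega>)) \<in> borel_measurable N"
  unfolding Wsum_def by (rule borel_measurable_sum) (rule wt_meas[OF V X])

lemma comp_meas_PiM:
  "k \<in> V \<Longrightarrow> (\<lambda>x. x k) \<in> measurable (PiM V (\<lambda>_. mu)) borel"
  using measurable_component_singleton[of k V "\<lambda>_. mu"] by (simp add: meas_mu_iff)

lemma Wsum_upd_meas:
  assumes V: "finite V" and rV: "r \<notin> V"
  shows "(\<lambda>x. Wsum r V (x(r := y))) \<in> borel_measurable (PiM V (\<lambda>_. mu))"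
proof (rule Wsum_meas[OF V])
  fix k assume k: "k \<in> insert r V"
  show "(\<lambda>x. (x(r := y)) k) \<in> measurable (PiM V (\<lambda>_. mu)) borel"
  proof (cases "k = r")
    case False
    with k have "k \<in> V" by auto
    then show ?thesis using False comp_meas_PiM by simp
  qed simp
qed

lemma Iv_meas:
  assumes V: "finite V" and rV: "r \<notin> V"
  shows "(\<lambda>y. Iv r V y) \<in> borel_measurable borel"
proof -
  interpret product_sigma_finite "\<lambda>_. mu" by (rule psf)
  interpret S: sigma_finite_measure "PiM V (\<lambda>_. mu)" by (rule sigma_finite[OF V])
  have "(\<lambda>\<omega>. Wsum r V ((snd \<omega>)(r := fst \<omega>))) \<in> borel_measurable (mu \<Otimes>\<^sub>M PiM V (\<lambda>_. mu))"
  proof (rule Wsum_meas[OF V])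
    fix k assume k: "k \<in> insert r V"
    show "(\<lambda>\<omega>. ((snd \<omega>)(r := fst \<omega>)) k) \<in> measurable (mu \<Otimes>\<^sub>M PiM V (\<lambda>_. mu)) borel"
    proof (cases "k = r")
      case True
      then show ?thesis using measurable_fst[of mu "PiM V (\<lambda>_. mu)"] by (simp add: meas_mu_iff)
    next
      case False
      then have "k \<in> V" using k by auto
      then show ?thesis using False measurable_compose[OF measurable_snd comp_meas_PiM[of k V]] by simp
    qed
  qed
  then have "(\<lambda>y. Iv r V y) \<in> borel_measurable mu"
    unfolding Iv_def by (intro S.borel_measurable_nn_integral) (simp add: case_prod_beta)
  then show ?thesis by (simp add: meas_from_mu)
qed

lemma Iv_empty: "Iv r {} y = 1"
proof -
  interpret product_sigma_finite "\<lambda>_. mu" by (rule psf)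
  show ?thesis unfolding Iv_def Wsum_def par_empty wt_empty
    by (subst nn_integral_empty) auto
qed

lemma Iv_relabel:
  assumes R: "relab h g r r' V V'" and V: "finite V"
  shows "Iv r' V' y = Iv r V y"
proof -
  interpret R: relab h g r r' V V' by fact
  have bij: "bij_betw h V V'"
    using R.inj_h R.hV by (auto simp: bij_betw_def intro: inj_on_subset)
  have V': "finite V'" using bij V bij_betw_finite by blast
  have "Iv r V y = (\<integral>\<^sup>+x. Wsum r V ((\<lambda>i\<in>V. x (h i))(r := y)) \<partial>PiM V' (\<lambda>_. mu))"
    unfolding Iv_def by (rule nn_integral_reindex[OF bij V Wsum_upd_meas[OF V R.rV]])
  also have "\<dots> = (\<integral>\<^sup>+x. Wsum r' V' (x(r' := y)) \<partial>PiM V' (\<lambda>_. mu))"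
  proof (rule nn_integral_cong)
    fix x
    have "Wsum r' V' (x(r' := y)) = (\<Sum>p\<in>par r V. wt (Af v) (Bf v) r V p (x(r' := y) \<circ> h))"
      unfolding Wsum_def by (rule sum_wt_relabel[OF R Bf_sym])
    also have "\<dots> = Wsum r V ((\<lambda>i\<in>V. x (h i))(r := y))"
      unfolding Wsum_def
    proof (rule sum.cong[OF refl], rule wt_cong)
      fix p i assume i: "i \<in> insert r V"
      show "(x(r' := y) \<circ> h) i = ((\<lambda>i\<in>V. x (h i))(r := y)) i"
      proof (cases "i = r")
        case True then show ?thesis using R.hr by simp
      next
        case False
        then have iV: "i \<in> V" using i by auto
        then have "h i \<in> V'" using R.hV by auto
        then have "h i \<noteq> r'" using R.rV' by auto
        then show ?thesis using False iV by simp
      qed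
    qed
    finally show "Wsum r V ((\<lambda>i\<in>V. x (h i))(r := y)) = Wsum r' V' (x(r' := y))" by simp
  qed
  finally show ?thesis unfolding Iv_def by simp
qed


lemma blockw_cong:
  assumes "\<And>i. i \<in> S \<Longrightarrow> x i = x' i"
  shows "blockw A B y S x = blockw A B y S x'"
  using assms unfolding blockw_def
  by (intro arg_cong2[where f="(*)"] prod.cong) (auto simp: pairs_def)

lemma Wsum_cong:
  assumes "\<And>i. i \<in> insert r V \<Longrightarrow> x i = x' i"
  shows "Wsum r V x = Wsum r V x'"
  unfolding Wsum_def by (rule sum.cong[OF refl], rule wt_cong) (use assms in auto)

lemma Iv_decomp:
  assumes rV: "r \<notin> V" and V: "finite V" and Vne: "V \<noteq> {}"
  shows "Iv r V y = (\<Sum>C\<in>{C. C \<subseteq> V \<and> C \<noteq> {}}. \<Sum>\<pi>\<in>(V - C) \<rightarrow>\<^sub>E C.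
      \<integral>\<^sup>+x. blockw (Af v) (Bf v) y C x * (\<Prod>c\<in>C. Iv c (blk (V - C) \<pi> c) (x c)) \<partial>PiM C (\<lambda>_. mu))"
proof -
  interpret product_sigma_finite "\<lambda>_. mu" by (rule psf)
  let ?B = "\<lambda>C \<pi> c. blk (V - C) \<pi> c"
  have finCs: "finite {C. C \<subseteq> V \<and> C \<noteq> {}}" using V by (auto intro: finite_subset[of _ "Pow V"])
  have finPi: "finite ((V - C) \<rightarrow>\<^sub>E C)" if "C \<subseteq> V" for C using V that by (intro finite_PiE) (auto intro: finite_subset)
  have Bsub: "?B C \<pi> c \<subseteq> V - C" for C \<pi> c by (auto simp: blk_def)
  have finB: "finite (?B C \<pi> c)" for C \<pi> c using V by (auto simp: blk_def)
  have cB: "c \<notin> ?B C \<pi> c" if "c \<in> C" for C \<pi> c using that by (auto simp: blk_def)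
  have term_meas: "(\<lambda>x. blockw (Af v) (Bf v) y C x * (\<Prod>c\<in>C. Wsum c (?B C \<pi> c) x)) \<in> borel_measurable (PiM V (\<lambda>_. mu))"
    if C: "C \<subseteq> V" for C \<pi>
  proof -
    have "(\<lambda>x. blockw (Af v) (Bf v) y C x) \<in> borel_measurable (PiM V (\<lambda>_. mu))"
      by (rule blockw_meas) (use C V in \<open>auto intro: finite_subset comp_meas_PiM\<close>)
    moreover have "(\<lambda>x. \<Prod>c\<in>C. Wsum c (?B C \<pi> c) x) \<in> borel_measurable (PiM V (\<lambda>_. mu))"
    proof (rule borel_measurable_prod_ennreal)
      fix c assume c: "c \<in> C"
      show "(\<lambda>x. Wsum c (?B C \<pi> c) x) \<in> borel_measurable (PiM V (\<lambda>_. mu))"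
        by (rule Wsum_meas[OF finB]) (use C c in \<open>auto intro!: comp_meas_PiM simp: blk_def\<close>)
    qed
    ultimately show ?thesis by measurable
  qed
  have "Iv r V y = (\<integral>\<^sup>+x. (\<Sum>C\<in>{C. C \<subseteq> V \<and> C \<noteq> {}}. \<Sum>\<pi>\<in>(V - C) \<rightarrow>\<^sub>E C.
        blockw (Af v) (Bf v) y C x * (\<Prod>c\<in>C. Wsum c (?B C \<pi> c) x)) \<partial>PiM V (\<lambda>_. mu))"
    unfolding Iv_def
  proof (rule nn_integral_cong)
    fix x
    have "Wsum r V (x(r := y)) = (\<Sum>C\<in>{C. C \<subseteq> V \<and> C \<noteq> {}}. \<Sum>\<pi>\<in>(V - C) \<rightarrow>\<^sub>E C.
        blockw (Af v) (Bf v) ((x(r := y)) r) C (x(r := y)) * (\<Prod>c\<in>C. Wsum c (?B C \<pi> c) (x(r := y))))"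
      unfolding Wsum_def by (rule sum_par_decomp[OF rV V Vne])
    also have "\<dots> = (\<Sum>C\<in>{C. C \<subseteq> V \<and> C \<noteq> {}}. \<Sum>\<pi>\<in>(V - C) \<rightarrow>\<^sub>E C.
        blockw (Af v) (Bf v) y C x * (\<Prod>c\<in>C. Wsum c (?B C \<pi> c) x))"
    proof (intro sum.cong refl arg_cong2[where f="(*)"] prod.cong)
      fix C \<pi> assume C: "C \<in> {C. C \<subseteq> V \<and> C \<noteq> {}}"
      show "blockw (Af v) (Bf v) ((x(r := y)) r) C (x(r := y)) = blockw (Af v) (Bf v) y C x"
      proof -
        have "blockw (Af v) (Bf v) y C (x(r := y)) = blockw (Af v) (Bf v) y C x"
        proof (rule blockw_cong)
          fix i assume "i \<in> C"
          then have "i \<noteq> r" using C rV by auto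
          then show "(x(r := y)) i = x i" by simp
        qed
        then show ?thesis by simp
      qed
      fix c assume c: "c \<in> C"
      show "Wsum c (?B C \<pi> c) (x(r := y)) = Wsum c (?B C \<pi> c) x"
        by (rule Wsum_cong) (use C c rV Bsub in auto)
    qed
    finally show "Wsum r V (x(r := y)) = (\<Sum>C\<in>{C. C \<subseteq> V \<and> C \<noteq> {}}. \<Sum>\<pi>\<in>(V - C) \<rightarrow>\<^sub>E C.
        blockw (Af v) (Bf v) y C x * (\<Prod>c\<in>C. Wsum c (?B C \<pi> c) x))" .
  qed
  also have "\<dots> = (\<Sum>C\<in>{C. C \<subseteq> V \<and> C \<noteq> {}}. \<Sum>\<pi>\<in>(V - C) \<rightarrow>\<^sub>E C.
        \<integral>\<^sup>+x. blockw (Af v) (Bf v) y C x * (\<Prod>c\<in>C. Wsum c (?B C \<pi> c) x) \<partial>PiM V (\<lambda>_. mu))"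
  proof -
    have "(\<integral>\<^sup>+x. (\<Sum>C\<in>{C. C \<subseteq> V \<and> C \<noteq> {}}. \<Sum>\<pi>\<in>(V - C) \<rightarrow>\<^sub>E C.
        blockw (Af v) (Bf v) y C x * (\<Prod>c\<in>C. Wsum c (?B C \<pi> c) x)) \<partial>PiM V (\<lambda>_. mu))
      = (\<Sum>C\<in>{C. C \<subseteq> V \<and> C \<noteq> {}}. \<integral>\<^sup>+x. (\<Sum>\<pi>\<in>(V - C) \<rightarrow>\<^sub>E C.
        blockw (Af v) (Bf v) y C x * (\<Prod>c\<in>C. Wsum c (?B C \<pi> c) x)) \<partial>PiM V (\<lambda>_. mu))"
      by (rule nn_integral_sum) (auto intro!: borel_measurable_sum term_meas)
    also have "\<dots> = (\<Sum>C\<in>{C. C \<subseteq> V \<and> C \<noteq> {}}. \<Sum>\<pi>\<in>(V - C) \<rightarrow>\<^sub>E C.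
        \<integral>\<^sup>+x. blockw (Af v) (Bf v) y C x * (\<Prod>c\<in>C. Wsum c (?B C \<pi> c) x) \<partial>PiM V (\<lambda>_. mu))"
      by (intro sum.cong refl nn_integral_sum) (auto intro!: term_meas)
    finally show ?thesis .
  qed
  also have "\<dots> = (\<Sum>C\<in>{C. C \<subseteq> V \<and> C \<noteq> {}}. \<Sum>\<pi>\<in>(V - C) \<rightarrow>\<^sub>E C.
      \<integral>\<^sup>+x. blockw (Af v) (Bf v) y C x * (\<Prod>c\<in>C. Iv c (?B C \<pi> c) (x c)) \<partial>PiM C (\<lambda>_. mu))"
  proof (intro sum.cong refl)
    fix C \<pi> assume C: "C \<in> {C. C \<subseteq> V \<and> C \<noteq> {}}" and \<pi>: "\<pi> \<in> (V - C) \<rightarrow>\<^sub>E C"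
    let ?D = "V - C"
    have CV: "C \<subseteq> V" using C by auto
    have finC: "finite C" using CV V finite_subset by blast
    have finD: "finite ?D" using V by auto
    have disj: "C \<inter> ?D = {}" by auto
    have un: "C \<union> ?D = V" using CV by auto
    have Dun: "?D = (\<Union>c\<in>C. ?B C \<pi> c)" using \<pi> by (auto simp: blk_def)
    have dfam: "disjoint_family_on (?B C \<pi>) C" by (auto simp: disjoint_family_on_def blk_def)
    have "(\<integral>\<^sup>+x. blockw (Af v) (Bf v) y C x * (\<Prod>c\<in>C. Wsum c (?B C \<pi> c) x) \<partial>PiM V (\<lambda>_. mu))
      = (\<integral>\<^sup>+x. (\<integral>\<^sup>+y'. blockw (Af v) (Bf v) y C (merge C ?D (x, y')) * (\<Prod>c\<in>C. Wsum c (?B C \<pi> c) (merge C ?D (x, y'))) \<partial>PiM ?D (\<lambda>_. mu)) \<partial>PiM C (\<lambda>_. mu))"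
      using product_nn_integral_fold[OF disj finC finD, of "\<lambda>x. blockw (Af v) (Bf v) y C x * (\<Prod>c\<in>C. Wsum c (?B C \<pi> c) x)"]
        term_meas[OF CV, of \<pi>] un by simp
    also have "\<dots> = (\<integral>\<^sup>+x. blockw (Af v) (Bf v) y C x * (\<Prod>c\<in>C. Iv c (?B C \<pi> c) (x c)) \<partial>PiM C (\<lambda>_. mu))"
    proof (rule nn_integral_cong)
      fix x
      define F where "F = (\<lambda>c y'. Wsum c (?B C \<pi> c) (y'(c := x c)))"
      have Fm: "F c \<in> borel_measurable (PiM (?B C \<pi> c) (\<lambda>_. mu))" if "c \<in> C" for c
        unfolding F_def by (rule Wsum_upd_meas[OF finB cB[OF that]])
      have Fr: "F c y' = F c (restrict y' (?B C \<pi> c))" if "c \<in> C" for c y'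
        unfolding F_def by (rule Wsum_cong) (use cB[OF that] in auto)
      have bm: "blockw (Af v) (Bf v) y C (merge C ?D (x, y')) = blockw (Af v) (Bf v) y C x" for y'
        by (rule blockw_cong) (simp add: merge_def)
      have wm: "Wsum c (?B C \<pi> c) (merge C ?D (x, y')) = F c y'" if c: "c \<in> C" for c y'
        unfolding F_def by (rule Wsum_cong) (use c cB[OF c] in \<open>auto simp: merge_def blk_def\<close>)
      have prodm: "(\<lambda>y'. \<Prod>c\<in>C. F c y') \<in> borel_measurable (PiM ?D (\<lambda>_. mu))"
      proof (rule borel_measurable_prod_ennreal)
        fix c assume c: "c \<in> C"
        have sub: "?B C \<pi> c \<subseteq> ?D" by (rule Bsub)
        have "(\<lambda>y'. F c (restrict y' (?B C \<pi> c))) \<in> borel_measurable (PiM ?D (\<lambda>_. mu))"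
          using measurable_compose[OF measurable_restrict_subset[OF sub] Fm[OF c]] .
        moreover have "(\<lambda>y'. F c (restrict y' (?B C \<pi> c))) = (\<lambda>y'. F c y')"
          by (rule ext, rule Fr[OF c, symmetric])
        ultimately show "(\<lambda>y'. F c y') \<in> borel_measurable (PiM ?D (\<lambda>_. mu))" by simp
      qed
      have "(\<integral>\<^sup>+y'. blockw (Af v) (Bf v) y C (merge C ?D (x, y')) * (\<Prod>c\<in>C. Wsum c (?B C \<pi> c) (merge C ?D (x, y'))) \<partial>PiM ?D (\<lambda>_. mu))
          = (\<integral>\<^sup>+y'. blockw (Af v) (Bf v) y C x * (\<Prod>c\<in>C. F c y') \<partial>PiM ?D (\<lambda>_. mu))"
        by (rule nn_integral_cong) (simp add: bm wm)
      also have "\<dots> = blockw (Af v) (Bf v) y C x * (\<integral>\<^sup>+y'. (\<Prod>c\<in>C. F c y') \<partial>PiM ?D (\<lambda>_. mu))"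
        by (rule nn_integral_cmult[OF prodm])
      also have "(\<integral>\<^sup>+y'. (\<Prod>c\<in>C. F c y') \<partial>PiM ?D (\<lambda>_. mu)) = (\<Prod>c\<in>C. \<integral>\<^sup>+y'. F c y' \<partial>PiM (?B C \<pi> c) (\<lambda>_. mu))"
      proof -
        have "(\<integral>\<^sup>+y'. (\<Prod>c\<in>C. F c y') \<partial>PiM (\<Union>c\<in>C. ?B C \<pi> c) (\<lambda>_. mu)) = (\<Prod>c\<in>C. \<integral>\<^sup>+y'. F c y' \<partial>PiM (?B C \<pi> c) (\<lambda>_. mu))"
          by (rule block_integral[OF finC finB dfam Fm Fr])
        then show ?thesis by (simp only: Dun[symmetric])
      qed
      also have "\<dots> = (\<Prod>c\<in>C. Iv c (?B C \<pi> c) (x c))"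
        unfolding Iv_def F_def ..
      finally show "(\<integral>\<^sup>+y'. blockw (Af v) (Bf v) y C (merge C ?D (x, y')) * (\<Prod>c\<in>C. Wsum c (?B C \<pi> c) (merge C ?D (x, y'))) \<partial>PiM ?D (\<lambda>_. mu))
          = blockw (Af v) (Bf v) y C x * (\<Prod>c\<in>C. Iv c (?B C \<pi> c) (x c))" .
    qed
    finally show "(\<integral>\<^sup>+x. blockw (Af v) (Bf v) y C x * (\<Prod>c\<in>C. Wsum c (?B C \<pi> c) x) \<partial>PiM V (\<lambda>_. mu))
      = (\<integral>\<^sup>+x. blockw (Af v) (Bf v) y C x * (\<Prod>c\<in>C. Iv c (?B C \<pi> c) (x c)) \<partial>PiM C (\<lambda>_. mu))" .
  qed
  finally show ?thesis .
qed


lemma avg_relabel: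
  assumes finC: "finite C" and cC: "card C = k"
    and H: "\<And>c. c \<in> C \<Longrightarrow> H c \<in> borel_measurable borel"
  shows "of_nat (fact k) * (\<integral>\<^sup>+x. blockw (Af v) (Bf v) y C x * (\<Prod>c\<in>C. H c (x c)) \<partial>PiM C (\<lambda>_. mu))
    = (\<Sum>h\<in>bijs k C. \<integral>\<^sup>+x. blockw (Af v) (Bf v) y {1..k} x * (\<Prod>j\<in>{1..k}. H (h j) (x j)) \<partial>PiM {1..k} (\<lambda>_. mu))"
proof -
  let ?L = "\<integral>\<^sup>+x. blockw (Af v) (Bf v) y C x * (\<Prod>c\<in>C. H c (x c)) \<partial>PiM C (\<lambda>_. mu)"
  have fm: "(\<lambda>x. blockw (Af v) (Bf v) y C x * (\<Prod>c\<in>C. H c (x c))) \<in> borel_measurable (PiM C (\<lambda>_. mu))"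
  proof -
    have "(\<lambda>x. blockw (Af v) (Bf v) y C x) \<in> borel_measurable (PiM C (\<lambda>_. mu))"
      by (rule blockw_meas) (use finC in \<open>auto intro: comp_meas_PiM\<close>)
    moreover have "(\<lambda>x. \<Prod>c\<in>C. H c (x c)) \<in> borel_measurable (PiM C (\<lambda>_. mu))"
      by (rule borel_measurable_prod_ennreal) (rule measurable_compose[OF comp_meas_PiM H], auto)
    ultimately show ?thesis by measurable
  qed
  have each: "(\<integral>\<^sup>+x. blockw (Af v) (Bf v) y {1..k} x * (\<Prod>j\<in>{1..k}. H (h j) (x j)) \<partial>PiM {1..k} (\<lambda>_. mu)) = ?L"
    if h: "h \<in> bijs k C" for h
  proof -
    have bh: "bij_betw h {1..k} C" by (rule bijs_bij[OF h finC cC])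
    define g where "g = the_inv_into {1..k} h"
    have bg: "bij_betw g C {1..k}" unfolding g_def by (rule bij_betw_the_inv_into[OF bh])
    have inj: "inj_on h {1..k}" and img: "h ` {1..k} = C" using bh by (auto simp: bij_betw_def)
    have gh: "g (h j) = j" if "j \<in> {1..k}" for j unfolding g_def using inj that by (rule the_inv_into_f_f)
    have "?L = (\<integral>\<^sup>+x. blockw (Af v) (Bf v) y C (\<lambda>c\<in>C. x (g c)) * (\<Prod>c\<in>C. H c ((\<lambda>c\<in>C. x (g c)) c)) \<partial>PiM {1..k} (\<lambda>_. mu))"
      by (rule nn_integral_reindex[OF bg finC fm])
    also have "\<dots> = (\<integral>\<^sup>+x. blockw (Af v) (Bf v) y {1..k} x * (\<Prod>j\<in>{1..k}. H (h j) (x j)) \<partial>PiM {1..k} (\<lambda>_. mu))"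
    proof (rule nn_integral_cong)
      fix x
      have "blockw (Af v) (Bf v) y C (\<lambda>c\<in>C. x (g c)) = blockw (Af v) (Bf v) y (h ` {1..k}) (\<lambda>c\<in>C. x (g c))"
        using img by simp
      also have "\<dots> = blockw (Af v) (Bf v) y {1..k} ((\<lambda>c\<in>C. x (g c)) \<circ> h)"
        by (rule blockw_relabel[OF inj Bf_sym])
      also have "\<dots> = blockw (Af v) (Bf v) y {1..k} x"
        by (rule blockw_cong) (use img gh in auto)
      finally have b: "blockw (Af v) (Bf v) y C (\<lambda>c\<in>C. x (g c)) = blockw (Af v) (Bf v) y {1..k} x" .
      have "(\<Prod>c\<in>C. H c ((\<lambda>c\<in>C. x (g c)) c)) = (\<Prod>c\<in>h ` {1..k}. H c ((\<lambda>c\<in>C. x (g c)) c))"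
        using img by simp
      also have "\<dots> = (\<Prod>j\<in>{1..k}. H (h j) ((\<lambda>c\<in>C. x (g c)) (h j)))"
        by (rule prod.reindex[OF inj, unfolded comp_def])
      also have "\<dots> = (\<Prod>j\<in>{1..k}. H (h j) (x j))"
        by (rule prod.cong[OF refl]) (use img gh in auto)
      finally show "blockw (Af v) (Bf v) y C (\<lambda>c\<in>C. x (g c)) * (\<Prod>c\<in>C. H c ((\<lambda>c\<in>C. x (g c)) c)) =
          blockw (Af v) (Bf v) y {1..k} x * (\<Prod>j\<in>{1..k}. H (h j) (x j))" using b by simp
    qed
    finally show ?thesis by simp
  qed
  have "(\<Sum>h\<in>bijs k C. \<integral>\<^sup>+x. blockw (Af v) (Bf v) y {1..k} x * (\<Prod>j\<in>{1..k}. H (h j) (x j)) \<partial>PiM {1..k} (\<lambda>_. mu))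
      = (\<Sum>h\<in>bijs k C. ?L)" by (rule sum.cong[OF refl]) (rule each)
  also have "\<dots> = of_nat (fact k) * ?L" using card_bijs[OF finC cC] by simp
  finally show ?thesis by simp
qed

lemma exists_relab:
  assumes finB: "finite B" and cB: "c \<notin> B"
  shows "\<exists>h g. relab h g c 0 B {1..card B}"
proof -
  obtain e where e: "bij_betw e {1..card B} B" using ex_bij_betw_nat_finite_1[OF finB] by blast
  define g where "g = (\<lambda>i. if i = 0 then c else e i)"
  define h where "h = (\<lambda>j. if j = c then 0 else the_inv_into {1..card B} e j)"
  have einj: "inj_on e {1..card B}" and eimg: "e ` {1..card B} = B" using e by (auto simp: bij_betw_def)
  have t1: "the_inv_into {1..card B} e j \<in> {1..card B}" "e (the_inv_into {1..card B} e j) = j" if "j \<in> B" for j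
  proof -
    have j: "j \<in> e ` {1..card B}" using that eimg by simp
    show "the_inv_into {1..card B} e j \<in> {1..card B}" by (rule the_inv_into_into[OF einj j order_refl])
    show "e (the_inv_into {1..card B} e j) = j" by (rule f_the_inv_into_f[OF einj j])
  qed
  have t2: "the_inv_into {1..card B} e (e i) = i" if "i \<in> {1..card B}" for i
    using einj that by (rule the_inv_into_f_f)
  have "relab h g c 0 B {1..card B}"
  proof
    show "c \<notin> B" by fact
    show "(0::nat) \<notin> {1..card B}" by simp
    show "h c = 0" by (simp add: h_def)
    show "g 0 = c" by (simp add: g_def)
    show "h ` B = {1..card B}"
    proof
      show "h ` B \<subseteq> {1..card B}" using t1 cB by (auto simp: h_def)
      show "{1..card B} \<subseteq> h ` B"
      proof
        fix i assume i: "i \<in> {1..card B}"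
        then have "e i \<in> B" using eimg by auto
        then have "h (e i) = i" using t2[OF i] cB by (auto simp: h_def)
        then show "i \<in> h ` B" using \<open>e i \<in> B\<close> by force
      qed
    qed
    show "g ` {1..card B} = B" using eimg by (auto simp: g_def)
    show "g (h i) = i" if "i \<in> insert c B" for i
    proof (cases "i = c")
      case False
      then have i: "i \<in> B" using that by auto
      have "the_inv_into {1..card B} e i \<noteq> 0" using t1(1)[OF i] by auto
      then show ?thesis using False t1(2)[OF i] by (simp add: g_def h_def)
    qed (simp add: g_def h_def)
    show "h (g i) = i" if "i \<in> insert 0 {1..card B}" for i
    proof (cases "i = 0")
      case False
      then have i: "i \<in> {1..card B}" using that by auto
      then have "e i \<in> B" using eimg by auto
      then have "e i \<noteq> c" using cB by auto
      then show ?thesis using False t2[OF i] by (simp add: g_def h_def)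
    qed (simp add: g_def h_def)
  qed
  then show ?thesis by blast
qed

lemma Iv_canon:
  assumes "finite B" "c \<notin> B"
  shows "Iv c B y = Iv 0 {1..card B} y"
proof -
  obtain h g where "relab h g c 0 B {1..card B}" using exists_relab[OF assms] by blast
  then show ?thesis using Iv_relabel assms(1) by metis
qed

end


lemma inv_fact_cancel: "ennreal (1 / fact k) * of_nat (fact k) = 1"
proof -
  have "ennreal (1 / fact k) * of_nat (fact k) = ennreal (1 / fact k * fact k)"
    by (subst ennreal_mult) (auto simp: ennreal_of_nat_eq_real_of_nat)
  then show ?thesis by simp
qed

lemma div_fact: "of_nat (fact k) * X = Y \<Longrightarrow> X = ennreal (1 / fact k) * Y"
proof -
  assume a: "of_nat (fact k) * X = Y"
  have "ennreal (1 / fact k) * Y = ennreal (1 / fact k) * (of_nat (fact k) * X)"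
    by (subst a[symmetric]) (rule refl)
  also have "\<dots> = (ennreal (1 / fact k) * of_nat (fact k)) * X" by (rule mult.assoc[symmetric])
  also have "\<dots> = X" by (simp only: inv_fact_cancel mult_1)
  finally show ?thesis by simp
qed

lemma SS_zero: "k > n \<Longrightarrow> SS g n k = 0"
proof -
  assume k: "k > n"
  have le: "card C \<le> n" if "C \<subseteq> {1..n}" for C using card_mono[OF _ that] by simp
  have e: "{C. C \<subseteq> {1..n} \<and> card C = k} = {}"
  proof (rule equals0I)
    fix C assume "C \<in> {C. C \<subseteq> {1..n} \<and> card C = k}"
    then have "C \<subseteq> {1..n}" "card C = k" by auto
    then show False using le[of C] k by simp
  qed
  show ?thesis unfolding SS_def e by simp
qed

context setting
begin

definition J :: "nat \<Rightarrow> 'a \<Rightarrow> ennreal" where "J n y = Iv 0 {1..n} y"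

lemma J_meas: "(\<lambda>y. J n y) \<in> borel_measurable borel"
  unfolding J_def by (rule Iv_meas) auto

lemma J0: "J 0 y = 1"
  by (simp add: J_def Iv_empty)

lemma Jcomp_meas: assumes "j \<in> I" shows "(\<lambda>x. J m (x j)) \<in> borel_measurable (PiM I (\<lambda>_. mu))"
  by (rule measurable_compose[OF comp_meas_PiM[OF assms] J_meas])

lemma SS_meas:
  assumes "\<And>j m. j \<in> {1..k} \<Longrightarrow> (\<lambda>x. G x j m) \<in> borel_measurable (PiM {1..k} (\<lambda>_. mu))"
  shows "(\<lambda>x. SS (G x) n k) \<in> borel_measurable (PiM {1..k} (\<lambda>_. mu))"
  unfolding SS_def
  by (intro borel_measurable_sum borel_measurable_prod_ennreal assms)

lemma blockw_meas_PiM: "finite S \<Longrightarrow> S \<subseteq> I \<Longrightarrow> (\<lambda>x. blockw (Af v) (Bf v) y S x) \<in> borel_measurable (PiM I (\<lambda>_. mu))"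
  by (rule blockw_meas) (auto intro: comp_meas_PiM)

lemma J_formula:
  assumes n: "n \<ge> 1"
  shows "J n y = (\<Sum>k\<in>{1..n}. ennreal (1 / fact k) *
     (\<integral>\<^sup>+x. blockw (Af v) (Bf v) y {1..k} x * SS (\<lambda>j m. J m (x j)) n k \<partial>PiM {1..k} (\<lambda>_. mu)))"
proof -
  let ?V = "{1..n}"
  let ?B = "\<lambda>C \<pi> c. blk (?V - C) \<pi> c"
  let ?Cs = "{C. C \<subseteq> ?V \<and> C \<noteq> {}}"
  let ?f = "\<lambda>k C \<pi> h. \<integral>\<^sup>+x. blockw (Af v) (Bf v) y {1..k} x * (\<Prod>j\<in>{1..k}. J (card (?B C \<pi> (h j))) (x j)) \<partial>PiM {1..k} (\<lambda>_. mu)"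
  have Vne: "?V \<noteq> {}" using n by auto
  have finB: "finite (?B C \<pi> c)" for C \<pi> c by (auto simp: blk_def)
  have cB: "c \<notin> ?B C \<pi> c" if "c \<in> C" for C \<pi> c using that by (auto simp: blk_def)
  have "J n y = (\<Sum>C\<in>?Cs. \<Sum>\<pi>\<in>(?V - C) \<rightarrow>\<^sub>E C.
      \<integral>\<^sup>+x. blockw (Af v) (Bf v) y C x * (\<Prod>c\<in>C. Iv c (?B C \<pi> c) (x c)) \<partial>PiM C (\<lambda>_. mu))"
    unfolding J_def by (rule Iv_decomp) (use Vne in auto)
  also have "\<dots> = (\<Sum>C\<in>?Cs. \<Sum>\<pi>\<in>(?V - C) \<rightarrow>\<^sub>E C. ennreal (1 / fact (card C)) * (\<Sum>h\<in>bijs (card C) C. ?f (card C) C \<pi> h))"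
  proof (intro sum.cong refl)
    fix C \<pi> assume C: "C \<in> ?Cs"
    have finC: "finite C" using C finite_subset by blast
    have "(\<integral>\<^sup>+x. blockw (Af v) (Bf v) y C x * (\<Prod>c\<in>C. Iv c (?B C \<pi> c) (x c)) \<partial>PiM C (\<lambda>_. mu))
        = (\<integral>\<^sup>+x. blockw (Af v) (Bf v) y C x * (\<Prod>c\<in>C. J (card (?B C \<pi> c)) (x c)) \<partial>PiM C (\<lambda>_. mu))"
      unfolding J_def
      by (intro nn_integral_cong arg_cong2[where f="(*)"] refl prod.cong Iv_canon finB cB)
    also have "\<dots> = ennreal (1 / fact (card C)) * (\<Sum>h\<in>bijs (card C) C. ?f (card C) C \<pi> h)"
      by (rule div_fact, rule avg_relabel[OF finC refl]) (rule J_meas)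
    finally show "(\<integral>\<^sup>+x. blockw (Af v) (Bf v) y C x * (\<Prod>c\<in>C. Iv c (?B C \<pi> c) (x c)) \<partial>PiM C (\<lambda>_. mu))
        = ennreal (1 / fact (card C)) * (\<Sum>h\<in>bijs (card C) C. ?f (card C) C \<pi> h)" .
  qed
  also have "\<dots> = (\<Sum>k\<in>{1..n}. \<Sum>C\<in>{C\<in>?Cs. card C = k}. \<Sum>\<pi>\<in>(?V - C) \<rightarrow>\<^sub>E C. ennreal (1 / fact (card C)) * (\<Sum>h\<in>bijs (card C) C. ?f (card C) C \<pi> h))"
  proof (rule sum.group[symmetric])
    show "finite ?Cs" by (auto intro: finite_subset[of _ "Pow ?V"])
    show "finite {1..n}" by simp
    show "card ` ?Cs \<subseteq> {1..n}"
    proof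
      fix k assume "k \<in> card ` ?Cs"
      then obtain C where C: "C \<subseteq> ?V" "C \<noteq> {}" "k = card C" by auto
      have "finite C" using C finite_subset by blast
      then have "card C \<ge> 1" using C by (simp add: Suc_le_eq card_gt_0_iff)
      moreover have "card C \<le> n" using card_mono[OF _ C(1)] by simp
      ultimately show "k \<in> {1..n}" using C by simp
    qed
  qed
  also have "\<dots> = (\<Sum>k\<in>{1..n}. ennreal (1 / fact k) *
     (\<integral>\<^sup>+x. blockw (Af v) (Bf v) y {1..k} x * SS (\<lambda>j m. J m (x j)) n k \<partial>PiM {1..k} (\<lambda>_. mu)))"
  proof (rule sum.cong[OF refl])
    fix k assume k: "k \<in> {1..n}"
    have Ceq: "{C\<in>?Cs. card C = k} = {C. C \<subseteq> ?V \<and> card C = k}" using k by auto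
    have finCk: "finite {C. C \<subseteq> ?V \<and> card C = k}" by (auto intro: finite_subset[of _ "Pow ?V"])
    have bm: "(\<lambda>x. blockw (Af v) (Bf v) y {1..k} x) \<in> borel_measurable (PiM {1..k} (\<lambda>_. mu))"
      by (rule blockw_meas_PiM) auto
    have pm: "(\<lambda>x. \<Prod>j\<in>{1..k}. J (card (?B C \<pi> (h j))) (x j)) \<in> borel_measurable (PiM {1..k} (\<lambda>_. mu))" for C \<pi> h
      by (intro borel_measurable_prod_ennreal Jcomp_meas) auto
    have "(\<Sum>C\<in>{C\<in>?Cs. card C = k}. \<Sum>\<pi>\<in>(?V - C) \<rightarrow>\<^sub>E C. ennreal (1 / fact (card C)) * (\<Sum>h\<in>bijs (card C) C. ?f (card C) C \<pi> h))
        = ennreal (1 / fact k) * (\<Sum>C\<in>{C. C \<subseteq> ?V \<and> card C = k}. \<Sum>h\<in>bijs k C. \<Sum>\<pi>\<in>(?V - C) \<rightarrow>\<^sub>E C. ?f k C \<pi> h)"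
    proof -
      have "(\<Sum>C\<in>{C\<in>?Cs. card C = k}. \<Sum>\<pi>\<in>(?V - C) \<rightarrow>\<^sub>E C. ennreal (1 / fact (card C)) * (\<Sum>h\<in>bijs (card C) C. ?f (card C) C \<pi> h))
          = (\<Sum>C\<in>{C. C \<subseteq> ?V \<and> card C = k}. ennreal (1 / fact k) * (\<Sum>h\<in>bijs k C. \<Sum>\<pi>\<in>(?V - C) \<rightarrow>\<^sub>E C. ?f k C \<pi> h))"
        unfolding Ceq
      proof (rule sum.cong[OF refl])
        fix C assume "C \<in> {C. C \<subseteq> ?V \<and> card C = k}"
        then have ck: "card C = k" by simp
        show "(\<Sum>\<pi>\<in>(?V - C) \<rightarrow>\<^sub>E C. ennreal (1 / fact (card C)) * (\<Sum>h\<in>bijs (card C) C. ?f (card C) C \<pi> h))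
            = ennreal (1 / fact k) * (\<Sum>h\<in>bijs k C. \<Sum>\<pi>\<in>(?V - C) \<rightarrow>\<^sub>E C. ?f k C \<pi> h)"
          unfolding ck sum_distrib_left[symmetric] by (rule arg_cong[where f="(*) _"], rule sum.swap)
      qed
      also have "\<dots> = ennreal (1 / fact k) * (\<Sum>C\<in>{C. C \<subseteq> ?V \<and> card C = k}. \<Sum>h\<in>bijs k C. \<Sum>\<pi>\<in>(?V - C) \<rightarrow>\<^sub>E C. ?f k C \<pi> h)"
        by (rule sum_distrib_left[symmetric])
      finally show ?thesis .
    qed
    also have "(\<Sum>C\<in>{C. C \<subseteq> ?V \<and> card C = k}. \<Sum>h\<in>bijs k C. \<Sum>\<pi>\<in>(?V - C) \<rightarrow>\<^sub>E C. ?f k C \<pi> h)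
        = (\<integral>\<^sup>+x. (\<Sum>C\<in>{C. C \<subseteq> ?V \<and> card C = k}. \<Sum>h\<in>bijs k C. \<Sum>\<pi>\<in>(?V - C) \<rightarrow>\<^sub>E C.
             blockw (Af v) (Bf v) y {1..k} x * (\<Prod>j\<in>{1..k}. J (card (?B C \<pi> (h j))) (x j))) \<partial>PiM {1..k} (\<lambda>_. mu))"
    proof -
      let ?F = "\<lambda>C h \<pi> x. blockw (Af v) (Bf v) y {1..k} x * (\<Prod>j\<in>{1..k}. J (card (?B C \<pi> (h j))) (x j))"
      have Fm: "(\<lambda>x. ?F C h \<pi> x) \<in> borel_measurable (PiM {1..k} (\<lambda>_. mu))" for C h \<pi>
        by (rule borel_measurable_times_ennreal[OF bm pm])
      have "(\<integral>\<^sup>+x. (\<Sum>C\<in>{C. C \<subseteq> ?V \<and> card C = k}. \<Sum>h\<in>bijs k C. \<Sum>\<pi>\<in>(?V - C) \<rightarrow>\<^sub>E C. ?F C h \<pi> x) \<partial>PiM {1..k} (\<lambda>_. mu))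
          = (\<Sum>C\<in>{C. C \<subseteq> ?V \<and> card C = k}. \<integral>\<^sup>+x. (\<Sum>h\<in>bijs k C. \<Sum>\<pi>\<in>(?V - C) \<rightarrow>\<^sub>E C. ?F C h \<pi> x) \<partial>PiM {1..k} (\<lambda>_. mu))"
        by (rule nn_integral_sum) (intro borel_measurable_sum Fm)
      also have "\<dots> = (\<Sum>C\<in>{C. C \<subseteq> ?V \<and> card C = k}. \<Sum>h\<in>bijs k C. \<integral>\<^sup>+x. (\<Sum>\<pi>\<in>(?V - C) \<rightarrow>\<^sub>E C. ?F C h \<pi> x) \<partial>PiM {1..k} (\<lambda>_. mu))"
        by (intro sum.cong refl nn_integral_sum borel_measurable_sum Fm)
      also have "\<dots> = (\<Sum>C\<in>{C. C \<subseteq> ?V \<and> card C = k}. \<Sum>h\<in>bijs k C. \<Sum>\<pi>\<in>(?V - C) \<rightarrow>\<^sub>E C. \<integral>\<^sup>+x. ?F C h \<pi> x \<partial>PiM {1..k} (\<lambda>_. mu))"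
        by (intro sum.cong refl nn_integral_sum Fm)
      finally show ?thesis by simp
    qed
    also have "\<dots> = (\<integral>\<^sup>+x. blockw (Af v) (Bf v) y {1..k} x * SS (\<lambda>j m. J m (x j)) n k \<partial>PiM {1..k} (\<lambda>_. mu))"
      unfolding SS_def by (simp add: sum_distrib_left)
    finally show "(\<Sum>C\<in>{C\<in>?Cs. card C = k}. \<Sum>\<pi>\<in>(?V - C) \<rightarrow>\<^sub>E C. ennreal (1 / fact (card C)) * (\<Sum>h\<in>bijs (card C) C. ?f (card C) C \<pi> h))
        = ennreal (1 / fact k) * (\<integral>\<^sup>+x. blockw (Af v) (Bf v) y {1..k} x * SS (\<lambda>j m. J m (x j)) n k \<partial>PiM {1..k} (\<lambda>_. mu))" .
  qed
  finally show ?thesis .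
qed

end


context setting
begin

definition T :: "'a \<Rightarrow> ennreal" where "T y = (\<Sum>n. ennreal (1 / fact n) * J n y)"
definition P :: "nat \<Rightarrow> 'a \<Rightarrow> ennreal" where "P N y = (\<Sum>n<N. ennreal (1 / fact n) * J n y)"

definition Fop :: "('a \<Rightarrow> ennreal) \<Rightarrow> 'a \<Rightarrow> ennreal" where
  "Fop G y = (\<Sum>m. ennreal (1 / fact (Suc m)) *
     (\<integral>\<^sup>+x. blockw (Af v) (Bf v) y {1..Suc m} x * (\<Prod>j\<in>{1..Suc m}. G (x j)) \<partial>PiM {1..Suc m} (\<lambda>_. mu)))"

definition II :: "nat \<Rightarrow> nat \<Rightarrow> 'a \<Rightarrow> ennreal" where
  "II n m y = (\<integral>\<^sup>+x. blockw (Af v) (Bf v) y {1..Suc m} x * SS (\<lambda>j l. J l (x j)) n (Suc m) \<partial>PiM {1..Suc m} (\<lambda>_. mu))"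

lemma J_series: "J n y = (if n = 0 then 1 else 0) + (\<Sum>m. ennreal (1 / fact (Suc m)) * II n m y)"
proof (cases "n = 0")
  case True
  then show ?thesis by (simp add: J0 II_def SS_zero)
next
  case False
  let ?t = "\<lambda>k. ennreal (1 / fact k) * (\<integral>\<^sup>+x. blockw (Af v) (Bf v) y {1..k} x * SS (\<lambda>j m. J m (x j)) n k \<partial>PiM {1..k} (\<lambda>_. mu))"
  have "J n y = (\<Sum>k\<in>{1..n}. ?t k)" using J_formula[of n y] False by simp
  also have "\<dots> = (\<Sum>m<n. ?t (Suc m))"
  proof -
    have "{1..n} = Suc ` {..<n}" by (simp add: image_Suc_lessThan)
    then show ?thesis by (simp add: sum.reindex)
  qed
  also have "\<dots> = (\<Sum>m. ?t (Suc m))"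
    by (rule suminf_finite[symmetric]) (auto simp: SS_zero)
  finally show ?thesis using False by (simp add: II_def)
qed

lemma II_meas_int:
  "(\<lambda>x. blockw (Af v) (Bf v) y {1..Suc m} x * SS (\<lambda>j l. G l (x j)) n (Suc m)) \<in> borel_measurable (PiM {1..Suc m} (\<lambda>_. mu))"
  if "\<And>l. G l \<in> borel_measurable borel" for G
proof -
  have "(\<lambda>x. SS (\<lambda>j l. G l (x j)) n (Suc m)) \<in> borel_measurable (PiM {1..Suc m} (\<lambda>_. mu))"
    by (rule SS_meas) (rule measurable_compose[OF comp_meas_PiM that])
  then show ?thesis by (intro borel_measurable_times_ennreal blockw_meas_PiM) auto
qed

lemma egf_J: "(\<Sum>n. ennreal (1 / fact n) * SS (\<lambda>j l. J l (x j)) n k) = (\<Prod>j\<in>{1..k}. T (x j))"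
  unfolding T_def by (rule egf_SS)

lemma T_eq: "T y = 1 + Fop T y"
proof -
  have "T y = (\<Sum>n. ennreal (1 / fact n) * (if n = 0 then 1 else 0) + ennreal (1 / fact n) * (\<Sum>m. ennreal (1 / fact (Suc m)) * II n m y))"
    unfolding T_def by (subst J_series) (simp add: distrib_left)
  also have "\<dots> = (\<Sum>n. ennreal (1 / fact n) * (if n = 0 then 1 else 0)) + (\<Sum>n. ennreal (1 / fact n) * (\<Sum>m. ennreal (1 / fact (Suc m)) * II n m y))"
    by (rule suminf_add[symmetric]) auto
  also have "(\<Sum>n. ennreal (1 / fact n) * (if n = 0 then 1 else 0)) = 1"
  proof -
    have "(\<Sum>n. ennreal (1 / fact n) * (if n = 0 then 1 else 0)) = (\<Sum>n<1. ennreal (1 / fact n) * (if n = 0 then 1 else (0::ennreal)))"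
      by (rule suminf_finite) auto
    then show ?thesis by simp
  qed
  also have "(\<Sum>n. ennreal (1 / fact n) * (\<Sum>m. ennreal (1 / fact (Suc m)) * II n m y))
      = (\<Sum>m. ennreal (1 / fact (Suc m)) * (\<Sum>n. ennreal (1 / fact n) * II n m y))"
  proof -
    have "(\<Sum>n. ennreal (1 / fact n) * (\<Sum>m. ennreal (1 / fact (Suc m)) * II n m y))
        = (\<Sum>n. \<Sum>m. ennreal (1 / fact (Suc m)) * (ennreal (1 / fact n) * II n m y))"
      by (simp add: ennreal_suminf_cmult[symmetric] mult.left_commute del: ennreal_suminf_cmult)
    also have "\<dots> = (\<Sum>m. \<Sum>n. ennreal (1 / fact (Suc m)) * (ennreal (1 / fact n) * II n m y))"
      by (rule suminf_swap_ennreal)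
    also have "\<dots> = (\<Sum>m. ennreal (1 / fact (Suc m)) * (\<Sum>n. ennreal (1 / fact n) * II n m y))"
      by simp
    finally show ?thesis .
  qed
  also have "\<dots> = Fop T y"
    unfolding Fop_def
  proof (rule suminf_cong, rule arg_cong[where f="(*) _"])
    fix m
    have "(\<Sum>n. ennreal (1 / fact n) * II n m y)
        = (\<Sum>n. \<integral>\<^sup>+x. ennreal (1 / fact n) * (blockw (Af v) (Bf v) y {1..Suc m} x * SS (\<lambda>j l. J l (x j)) n (Suc m)) \<partial>PiM {1..Suc m} (\<lambda>_. mu))"
      unfolding II_def by (intro suminf_cong nn_integral_cmult[symmetric] II_meas_int J_meas)
    also have "\<dots> = (\<integral>\<^sup>+x. (\<Sum>n. ennreal (1 / fact n) * (blockw (Af v) (Bf v) y {1..Suc m} x * SS (\<lambda>j l. J l (x j)) n (Suc m))) \<partial>PiM {1..Suc m} (\<lambda>_. mu))"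
      by (rule nn_integral_suminf[symmetric]) (intro borel_measurable_times_ennreal borel_measurable_const II_meas_int J_meas)
    also have "\<dots> = (\<integral>\<^sup>+x. blockw (Af v) (Bf v) y {1..Suc m} x * (\<Prod>j\<in>{1..Suc m}. T (x j)) \<partial>PiM {1..Suc m} (\<lambda>_. mu))"
    proof (rule nn_integral_cong)
      fix x
      have "(\<Sum>n. ennreal (1 / fact n) * (blockw (Af v) (Bf v) y {1..Suc m} x * SS (\<lambda>j l. J l (x j)) n (Suc m)))
          = blockw (Af v) (Bf v) y {1..Suc m} x * (\<Sum>n. ennreal (1 / fact n) * SS (\<lambda>j l. J l (x j)) n (Suc m))"
        by (simp add: ennreal_suminf_cmult[symmetric] mult.left_commute del: ennreal_suminf_cmult)
      then show "(\<Sum>n. ennreal (1 / fact n) * (blockw (Af v) (Bf v) y {1..Suc m} x * SS (\<lambda>j l. J l (x j)) n (Suc m)))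
          = blockw (Af v) (Bf v) y {1..Suc m} x * (\<Prod>j\<in>{1..Suc m}. T (x j))"
        by (simp add: egf_J)
    qed
    finally show "(\<Sum>n. ennreal (1 / fact n) * II n m y) = (\<integral>\<^sup>+x. blockw (Af v) (Bf v) y {1..Suc m} x * (\<Prod>j\<in>{1..Suc m}. T (x j)) \<partial>PiM {1..Suc m} (\<lambda>_. mu))" .
  qed
  finally show ?thesis .
qed


lemma Fop_mono:
  assumes "\<And>w. G w \<le> G' w"
  shows "Fop G y \<le> Fop G' y"
  unfolding Fop_def
proof (rule suminf_le)
  fix m
  show "ennreal (1 / fact (Suc m)) * (\<integral>\<^sup>+x. blockw (Af v) (Bf v) y {1..Suc m} x * (\<Prod>j\<in>{1..Suc m}. G (x j)) \<partial>PiM {1..Suc m} (\<lambda>_. mu))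
      \<le> ennreal (1 / fact (Suc m)) * (\<integral>\<^sup>+x. blockw (Af v) (Bf v) y {1..Suc m} x * (\<Prod>j\<in>{1..Suc m}. G' (x j)) \<partial>PiM {1..Suc m} (\<lambda>_. mu))"
  proof (rule mult_left_mono)
    show "(\<integral>\<^sup>+x. blockw (Af v) (Bf v) y {1..Suc m} x * (\<Prod>j\<in>{1..Suc m}. G (x j)) \<partial>PiM {1..Suc m} (\<lambda>_. mu))
      \<le> (\<integral>\<^sup>+x. blockw (Af v) (Bf v) y {1..Suc m} x * (\<Prod>j\<in>{1..Suc m}. G' (x j)) \<partial>PiM {1..Suc m} (\<lambda>_. mu))"
    proof (rule nn_integral_mono)
      fix x
      show "blockw (Af v) (Bf v) y {1..Suc m} x * (\<Prod>j\<in>{1..Suc m}. G (x j)) \<le> blockw (Af v) (Bf v) y {1..Suc m} x * (\<Prod>j\<in>{1..Suc m}. G' (x j))"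
        by (rule mult_left_mono[OF prod_mono_ennreal]) (auto intro: assms)
    qed
  qed simp
qed auto

lemma P_le: "P (Suc N) y \<le> 1 + Fop (P N) y"
proof -
  have "P (Suc N) y = (\<Sum>n<Suc N. ennreal (1 / fact n) * (if n = 0 then 1 else 0)) + (\<Sum>n<Suc N. ennreal (1 / fact n) * (\<Sum>m. ennreal (1 / fact (Suc m)) * II n m y))"
    unfolding P_def by (subst J_series) (simp add: distrib_left sum.distrib)
  also have "(\<Sum>n<Suc N. ennreal (1 / fact n) * (if n = 0 then 1 else (0::ennreal))) = 1"
    by (simp add: sum.lessThan_Suc_shift del: sum.lessThan_Suc)
  also have "(\<Sum>n<Suc N. ennreal (1 / fact n) * (\<Sum>m. ennreal (1 / fact (Suc m)) * II n m y))
      = (\<Sum>m. ennreal (1 / fact (Suc m)) * (\<Sum>n<Suc N. ennreal (1 / fact n) * II n m y))"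
  proof -
    have "(\<Sum>n<Suc N. ennreal (1 / fact n) * (\<Sum>m. ennreal (1 / fact (Suc m)) * II n m y))
        = (\<Sum>n<Suc N. \<Sum>m. ennreal (1 / fact (Suc m)) * (ennreal (1 / fact n) * II n m y))"
      by (simp add: ennreal_suminf_cmult[symmetric] mult.left_commute del: ennreal_suminf_cmult)
    also have "\<dots> = (\<Sum>m. \<Sum>n<Suc N. ennreal (1 / fact (Suc m)) * (ennreal (1 / fact n) * II n m y))"
      by (rule suminf_sum[symmetric]) auto
    also have "\<dots> = (\<Sum>m. ennreal (1 / fact (Suc m)) * (\<Sum>n<Suc N. ennreal (1 / fact n) * II n m y))"
      by (simp only: sum_distrib_left)
    finally show ?thesis .
  qed
  also have "\<dots> \<le> Fop (P N) y"
    unfolding Fop_def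
  proof (rule suminf_le)
    fix m
    let ?k = "Suc m"
    let ?g = "\<lambda>x j l. if l < N then J l (x j) else 0"
    have "(\<Sum>n<Suc N. ennreal (1 / fact n) * II n m y)
        = (\<integral>\<^sup>+x. (\<Sum>n<Suc N. ennreal (1 / fact n) * (blockw (Af v) (Bf v) y {1..?k} x * SS (\<lambda>j l. J l (x j)) n ?k)) \<partial>PiM {1..?k} (\<lambda>_. mu))"
    proof -
      have im: "(\<lambda>x. blockw (Af v) (Bf v) y {1..?k} x * SS (\<lambda>j l. J l (x j)) n ?k) \<in> borel_measurable (PiM {1..?k} (\<lambda>_. mu))" for n
        using II_meas_int[of J] J_meas by simp
      have "(\<Sum>n<Suc N. ennreal (1 / fact n) * II n m y)
          = (\<Sum>n<Suc N. \<integral>\<^sup>+x. ennreal (1 / fact n) * (blockw (Af v) (Bf v) y {1..?k} x * SS (\<lambda>j l. J l (x j)) n ?k) \<partial>PiM {1..?k} (\<lambda>_. mu))"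
        unfolding II_def by (intro sum.cong refl nn_integral_cmult[symmetric] im)
      also have "\<dots> = (\<integral>\<^sup>+x. (\<Sum>n<Suc N. ennreal (1 / fact n) * (blockw (Af v) (Bf v) y {1..?k} x * SS (\<lambda>j l. J l (x j)) n ?k)) \<partial>PiM {1..?k} (\<lambda>_. mu))"
        by (rule nn_integral_sum[symmetric]) (intro borel_measurable_times_ennreal borel_measurable_const im)
      finally show ?thesis .
    qed
    also have "\<dots> \<le> (\<integral>\<^sup>+x. blockw (Af v) (Bf v) y {1..?k} x * (\<Prod>j\<in>{1..?k}. P N (x j)) \<partial>PiM {1..?k} (\<lambda>_. mu))"
    proof (rule nn_integral_mono)
      fix x
      have "(\<Sum>n<Suc N. ennreal (1 / fact n) * SS (\<lambda>j l. J l (x j)) n ?k)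
          = (\<Sum>n<Suc N. ennreal (1 / fact n) * SS (?g x) n ?k)"
        by (intro sum.cong refl arg_cong[where f="(*) _"] SS_cong) auto
      also have "\<dots> \<le> (\<Sum>n. ennreal (1 / fact n) * SS (?g x) n ?k)"
        by (rule sum_le_suminf) auto
      also have "\<dots> = (\<Prod>j\<in>{1..?k}. \<Sum>l. ennreal (1 / fact l) * ?g x j l)"
        by (rule egf_SS)
      also have "\<dots> = (\<Prod>j\<in>{1..?k}. P N (x j))"
      proof (rule prod.cong[OF refl])
        fix j
        have "(\<Sum>l. ennreal (1 / fact l) * ?g x j l) = (\<Sum>l<N. ennreal (1 / fact l) * ?g x j l)"
          by (rule suminf_finite) auto
        then show "(\<Sum>l. ennreal (1 / fact l) * ?g x j l) = P N (x j)" by (simp add: P_def)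
      qed
      finally have le: "(\<Sum>n<Suc N. ennreal (1 / fact n) * SS (\<lambda>j l. J l (x j)) n ?k) \<le> (\<Prod>j\<in>{1..?k}. P N (x j))" .
      have "(\<Sum>n<Suc N. ennreal (1 / fact n) * (blockw (Af v) (Bf v) y {1..?k} x * SS (\<lambda>j l. J l (x j)) n ?k))
          = blockw (Af v) (Bf v) y {1..?k} x * (\<Sum>n<Suc N. ennreal (1 / fact n) * SS (\<lambda>j l. J l (x j)) n ?k)"
        by (simp only: sum_distrib_left mult.left_commute)
      also have "\<dots> \<le> blockw (Af v) (Bf v) y {1..?k} x * (\<Prod>j\<in>{1..?k}. P N (x j))"
        by (rule mult_left_mono[OF le]) simp
      finally show "(\<Sum>n<Suc N. ennreal (1 / fact n) * (blockw (Af v) (Bf v) y {1..?k} x * SS (\<lambda>j l. J l (x j)) n ?k))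
          \<le> blockw (Af v) (Bf v) y {1..?k} x * (\<Prod>j\<in>{1..?k}. P N (x j))" .
    qed
    finally show "ennreal (1 / fact (Suc m)) * (\<Sum>n<Suc N. ennreal (1 / fact n) * II n m y)
        \<le> ennreal (1 / fact (Suc m)) * (\<integral>\<^sup>+x. blockw (Af v) (Bf v) y {1..Suc m} x * (\<Prod>j\<in>{1..Suc m}. P N (x j)) \<partial>PiM {1..Suc m} (\<lambda>_. mu))"
      by (rule mult_left_mono) simp
  qed auto
  finally show ?thesis by simp
qed

lemma T_SUP: "T y = (SUP N. P N y)"
  unfolding T_def P_def by (rule suminf_eq_SUP)


lemma T_meas: "T \<in> borel_measurable borel"
proof -
  have "(\<lambda>y. \<Sum>n. ennreal (1 / fact n) * J n y) \<in> borel_measurable borel"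
    by (intro borel_measurable_suminf_order borel_measurable_times_ennreal borel_measurable_const J_meas)
  then show ?thesis unfolding T_def[abs_def] .
qed

lemma T_ge1: "T y \<ge> 1"
  using T_eq[of y] by simp

lemma psf_lam: "product_sigma_finite (\<lambda>_. lam)"
  unfolding product_sigma_finite_def using sf_lam by simp

lemma comp_meas_PiM_lam:
  "k \<in> V \<Longrightarrow> (\<lambda>x. x k) \<in> measurable (PiM V (\<lambda>_. lam)) borel"
  using measurable_component_singleton[of k V "\<lambda>_. lam"] by (simp add: meas_lam_iff)

lemma zprod_meas: "(\<lambda>x. \<Prod>i\<in>I. ennreal (z (x i))) \<in> borel_measurable (PiM I (\<lambda>_. lam))"
proof (rule borel_measurable_prod_ennreal)
  fix i assume "i \<in> I"
  have "(\<lambda>w. ennreal (z w)) \<in> borel_measurable borel" using z_meas by (simp add: meas_from_lam)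
  then show "(\<lambda>x. ennreal (z (x i))) \<in> borel_measurable (PiM I (\<lambda>_. lam))"
    using measurable_compose[OF comp_meas_PiM_lam[OF \<open>i \<in> I\<close>]] by blast
qed

lemma PiM_mu_density:
  assumes I: "finite I"
  shows "PiM I (\<lambda>_. mu) = density (PiM I (\<lambda>_. lam)) (\<lambda>x. \<Prod>i\<in>I. ennreal (z (x i)))"
proof -
  interpret M: product_sigma_finite "\<lambda>_. mu" by (rule psf)
  interpret L: product_sigma_finite "\<lambda>_. lam" by (rule psf_lam)
  have "density (PiM I (\<lambda>_. lam)) (\<lambda>x. \<Prod>i\<in>I. ennreal (z (x i))) = PiM I (\<lambda>_. mu)"
  proof (rule M.PiM_eqI[OF I])
    show "sets (density (PiM I (\<lambda>_. lam)) (\<lambda>x. \<Prod>i\<in>I. ennreal (z (x i)))) = sets (PiM I (\<lambda>_. mu))"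
      by (simp add: sets_mu lam_borel cong: sets_PiM_cong)
    fix A assume A: "\<And>i. i \<in> I \<Longrightarrow> A i \<in> sets mu"
    have Al: "A i \<in> sets lam" if "i \<in> I" for i using A[OF that] by (simp add: sets_mu lam_borel)
    have zm: "(\<lambda>w. ennreal (z w)) \<in> borel_measurable lam" using z_meas by simp
    have PA: "PiE I A \<in> sets (PiM I (\<lambda>_. lam))" using Al by (intro sets_PiM_I_finite I)
    have "emeasure (density (PiM I (\<lambda>_. lam)) (\<lambda>x. \<Prod>i\<in>I. ennreal (z (x i)))) (PiE I A)
        = (\<integral>\<^sup>+x. (\<Prod>i\<in>I. ennreal (z (x i))) * indicator (PiE I A) x \<partial>PiM I (\<lambda>_. lam))"
      by (rule emeasure_density[OF zprod_meas PA])
    also have "\<dots> = (\<integral>\<^sup>+x. (\<Prod>i\<in>I. ennreal (z (x i)) * indicator (A i) (x i)) \<partial>PiM I (\<lambda>_. lam))"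
    proof (rule nn_integral_cong)
      fix x assume x: "x \<in> space (PiM I (\<lambda>_. lam))"
      have "indicator (PiE I A) x = (\<Prod>i\<in>I. indicator (A i) (x i) :: ennreal)"
        using x I by (auto simp: indicator_def space_PiM PiE_iff)
      then show "(\<Prod>i\<in>I. ennreal (z (x i))) * indicator (PiE I A) x = (\<Prod>i\<in>I. ennreal (z (x i)) * indicator (A i) (x i))"
        by (simp add: prod.distrib)
    qed
    also have "\<dots> = (\<Prod>i\<in>I. \<integral>\<^sup>+w. ennreal (z w) * indicator (A i) w \<partial>lam)"
      by (rule L.product_nn_integral_prod[OF I]) (use Al zm in measurable)
    also have "\<dots> = (\<Prod>i\<in>I. emeasure mu (A i))"
      unfolding mu_def by (intro prod.cong refl emeasure_density[symmetric] zm Al) 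
    finally show "emeasure (density (PiM I (\<lambda>_. lam)) (\<lambda>x. \<Prod>i\<in>I. ennreal (z (x i)))) (PiE I A) = (\<Prod>i\<in>I. emeasure mu (A i))" .
  qed
  then show ?thesis by simp
qed

lemma cond_sum_Fop:
  assumes a: "a \<in> borel_measurable lam"
  shows "cond_sum lam v z a x0 = Fop (\<lambda>w. ennreal (exp (a w))) x0"
  unfolding cond_sum_def Fop_def Let_def
proof (rule suminf_cong, rule arg_cong[where f="(*) _"])
  fix m
  let ?I = "{1..Suc m}"
  have am: "(\<lambda>w. ennreal (exp (a w))) \<in> borel_measurable borel" using a by (simp add: meas_from_lam)
  have fm: "(\<lambda>x. blockw (Af v) (Bf v) x0 ?I x * (\<Prod>j\<in>?I. ennreal (exp (a (x j))))) \<in> borel_measurable (PiM ?I (\<lambda>_. lam))"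
  proof (rule borel_measurable_times_ennreal)
    show "(\<lambda>x. blockw (Af v) (Bf v) x0 ?I x) \<in> borel_measurable (PiM ?I (\<lambda>_. lam))"
      by (rule blockw_meas) (auto intro: comp_meas_PiM_lam)
    show "(\<lambda>x. \<Prod>j\<in>?I. ennreal (exp (a (x j)))) \<in> borel_measurable (PiM ?I (\<lambda>_. lam))"
      by (rule borel_measurable_prod_ennreal) (rule measurable_compose[OF comp_meas_PiM_lam am], simp)
  qed
  have "(\<integral>\<^sup>+x. blockw (Af v) (Bf v) x0 ?I x * (\<Prod>j\<in>?I. ennreal (exp (a (x j)))) \<partial>PiM ?I (\<lambda>_. mu))
      = (\<integral>\<^sup>+x. (\<Prod>i\<in>?I. ennreal (z (x i))) * (blockw (Af v) (Bf v) x0 ?I x * (\<Prod>j\<in>?I. ennreal (exp (a (x j))))) \<partial>PiM ?I (\<lambda>_. lam))"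
    unfolding PiM_mu_density[OF finite_atLeastAtMost] by (rule nn_integral_density[OF zprod_meas fm])
  also have "\<dots> = (\<integral>\<^sup>+y. (\<Prod>j\<in>?I. ennreal \<bar>mayer v x0 (y j)\<bar>) *
                 (\<Prod>p\<in>{(i, j). i \<in> ?I \<and> j \<in> ?I \<and> i < j}. ennreal (1 + mayer v (y (fst p)) (y (snd p)))) *
                 (\<Prod>j\<in>?I. ennreal (z (y j) * exp (a (y j)))) \<partial>PiM ?I (\<lambda>_. lam))"
  proof (rule nn_integral_cong)
    fix y
    have "(\<Prod>j\<in>?I. ennreal (z (y j) * exp (a (y j)))) = (\<Prod>j\<in>?I. ennreal (z (y j))) * (\<Prod>j\<in>?I. ennreal (exp (a (y j))))"
      by (simp add: ennreal_mult z_nonneg prod.distrib)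
    then show "(\<Prod>i\<in>?I. ennreal (z (y i))) * (blockw (Af v) (Bf v) x0 ?I y * (\<Prod>j\<in>?I. ennreal (exp (a (y j)))))
        = (\<Prod>j\<in>?I. ennreal \<bar>mayer v x0 (y j)\<bar>) *
                 (\<Prod>p\<in>{(i, j). i \<in> ?I \<and> j \<in> ?I \<and> i < j}. ennreal (1 + mayer v (y (fst p)) (y (snd p)))) *
                 (\<Prod>j\<in>?I. ennreal (z (y j) * exp (a (y j))))"
      by (simp add: blockw_def Af_def Bf_def pairs_def ac_simps)
  qed
  finally show "(\<integral>\<^sup>+y. (\<Prod>j\<in>?I. ennreal \<bar>mayer v x0 (y j)\<bar>) *
                 (\<Prod>p\<in>{(i, j). i \<in> ?I \<and> j \<in> ?I \<and> i < j}. ennreal (1 + mayer v (y (fst p)) (y (snd p)))) *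
                 (\<Prod>j\<in>?I. ennreal (z (y j) * exp (a (y j)))) \<partial>PiM ?I (\<lambda>_. lam))
      = (\<integral>\<^sup>+x. blockw (Af v) (Bf v) x0 ?I x * (\<Prod>j\<in>?I. ennreal (exp (a (x j)))) \<partial>PiM ?I (\<lambda>_. mu))" by simp
qed

lemma Ttilde_T: "Ttilde lam v z q = T q"
proof -
  have AB: "Af v = (\<lambda>a b. ennreal \<bar>mayer v a b\<bar>)" "Bf v = (\<lambda>a b. ennreal (1 + mayer v a b))"
    by (auto simp: Af_def Bf_def fun_eq_iff)
  have Jn: "J n q = (\<integral>\<^sup>+ x. (\<Sum>T\<in>trees n. tree_weight v n T (x(0 := q))) \<partial>(PiM {1..n} (\<lambda>_. density lam (\<lambda>y. ennreal (z y)))))" for n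
    unfolding J_def Iv_def Wsum_def sum_trees_par AB mu_def ..
  have "T q = (\<Sum>j. ennreal (1 / fact (j + 1)) * J (j + 1) q) + (\<Sum>j<1. ennreal (1 / fact j) * J j q)"
    unfolding T_def by (rule suminf_offset) simp
  then have "T q = 1 + (\<Sum>m. ennreal (1 / fact (Suc m)) * J (Suc m) q)" by (simp add: J0 add.commute)
  then show ?thesis unfolding Ttilde_def Let_def Jn[symmetric] by simp
qed

end


theorem mainTheorem9:
  fixes lam :: "'a :: polish_space measure"
    and v :: "'a \<Rightarrow> 'a \<Rightarrow> ennreal"
    and z :: "'a \<Rightarrow> real"
  assumes lam_borel: "sets lam = sets borel"
    and lam_fin: "\<And>B. bounded B \<Longrightarrow> B \<in> sets borel \<Longrightarrow> emeasure lam B < \<infinity>"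
    and v_meas: "(\<lambda>p. v (fst p) (snd p)) \<in> borel_measurable (lam \<Otimes>\<^sub>M lam)"
    and v_sym: "\<And>x y. v x y = v y x"
    and z_meas: "z \<in> borel_measurable lam"
    and z_nonneg: "\<And>x. z x \<ge> 0"
  shows "(\<forall>q. Ttilde lam v z q < \<infinity>) \<longleftrightarrow>
         (\<exists>a :: 'a \<Rightarrow> real. a \<in> borel_measurable lam \<and> (\<forall>x. a x \<ge> 0) \<and>
            (\<forall>x0. cond_sum lam v z a x0 \<le> ennreal (exp (a x0) - 1)))"
proof -
  interpret setting lam v z
    using lam_borel lam_fin v_meas v_sym z_meas z_nonneg by unfold_locales auto
  show ?thesis
  proof
    assume fin: "\<forall>q. Ttilde lam v z q < \<infinity>"
    define a where "a = (\<lambda>y. ln (enn2real (T y)))"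
    have Tfin: "T y \<noteq> \<top>" for y
    proof -
      have "Ttilde lam v z y < \<infinity>" using fin by blast
      then show ?thesis unfolding Ttilde_T by simp
    qed
    have Tge: "enn2real (T y) \<ge> 1" for y
    proof -
      have "T y < \<top>" using Tfin[of y] by (simp add: top.not_eq_extremum)
      then have "enn2real 1 \<le> enn2real (T y)" by (rule enn2real_mono[OF T_ge1])
      then show ?thesis by simp
    qed
    have ea: "ennreal (exp (a y)) = T y" for y
    proof -
      have "exp (a y) = enn2real (T y)" using Tge[of y] by (simp add: a_def)
      then show ?thesis using Tfin[of y] by (simp add: ennreal_enn2real_if)
    qed
    have am: "a \<in> borel_measurable lam"
    proof -
      have "(\<lambda>y. ln (enn2real (T y))) \<in> borel_measurable borel" using T_meas by measurable
      then show ?thesis by (simp add: a_def meas_from_lam)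
    qed
    have a0: "a x \<ge> 0" for x using Tge[of x] by (simp add: a_def)
    have "cond_sum lam v z a x0 \<le> ennreal (exp (a x0) - 1)" for x0
    proof -
      have "cond_sum lam v z a x0 = Fop T x0"
        using cond_sum_Fop[OF am] ea by (simp add: fun_eq_iff)
      also have "\<dots> = T x0 - 1" using T_eq[of x0] by simp
      also have "\<dots> = ennreal (exp (a x0)) - ennreal 1" using ea by simp
      also have "\<dots> = ennreal (exp (a x0) - 1)" by (rule ennreal_minus) simp
      finally show ?thesis by simp
    qed
    then show "\<exists>a :: 'a \<Rightarrow> real. a \<in> borel_measurable lam \<and> (\<forall>x. a x \<ge> 0) \<and>
            (\<forall>x0. cond_sum lam v z a x0 \<le> ennreal (exp (a x0) - 1))"
      using am a0 by blast
  next
    assume "\<exists>a :: 'a \<Rightarrow> real. a \<in> borel_measurable lam \<and> (\<forall>x. a x \<ge> 0) \<and>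
            (\<forall>x0. cond_sum lam v z a x0 \<le> ennreal (exp (a x0) - 1))"
    then obtain a :: "'a \<Rightarrow> real" where am: "a \<in> borel_measurable lam" and a0: "\<And>x. a x \<ge> 0"
      and ca: "\<And>x0. cond_sum lam v z a x0 \<le> ennreal (exp (a x0) - 1)" by blast
    have PN: "P N y \<le> ennreal (exp (a y))" for N y
    proof (induction N arbitrary: y)
      case 0
      then show ?case by (simp add: P_def)
    next
      case (Suc N)
      have "P (Suc N) y \<le> 1 + Fop (P N) y" by (rule P_le)
      also have "\<dots> \<le> 1 + Fop (\<lambda>w. ennreal (exp (a w))) y"
        by (intro add_left_mono Fop_mono Suc.IH)
      also have "\<dots> = 1 + cond_sum lam v z a y" using cond_sum_Fop[OF am] by simp
      also have "\<dots> \<le> 1 + ennreal (exp (a y) - 1)" by (intro add_left_mono ca)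
      also have "\<dots> = ennreal (exp (a y))"
      proof -
        have "exp (a y) \<ge> 1" using a0[of y] by simp
        then have "ennreal 1 + ennreal (exp (a y) - 1) = ennreal (1 + (exp (a y) - 1))"
          by (subst ennreal_plus) auto
        then show ?thesis by simp
      qed
      finally show ?case .
    qed
    have "T q \<le> ennreal (exp (a q))" for q
      unfolding T_SUP by (rule SUP_least) (rule PN)
    then show "\<forall>q. Ttilde lam v z q < \<infinity>"
      using Ttilde_T by (metis ennreal_less_top le_less_trans infinity_ennreal_def)
  qed
qed


end
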